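(* Let $n\ge 1$, let $\xi_1,\dots,\xi_n$ be $n$ distinct points on the unit circle $\mathbb{T}=\{|\zeta|=1\}$, and let $\nu_1,\dots,\nu_n>0$ with $\sum_{j=1}^n\nu_j=1$. Then there is a unique $n\times n$ finite CMV matrix $\mathcal{C}=\mathcal{C}(\alpha_0,\dots,\alpha_{n-2};\beta)$ (with $|\alpha_j|<1$, $|\beta|=1$) whose $n$-th spectral measure is $\sum_{j=1}^n\nu_j\,\delta(\xi_j)$.
   Context: For $\alpha\in\mathbb{C}$ with $|\alpha|\le 1$ put $\rho=\sqrt{1-|\alpha|^2}$ and $\Theta(\alpha)=\begin{pmatrix}\bar\alpha&\rho\\ \rho&-\alpha\end{pmatrix}$. Given $\alpha_0,\dots,\alpha_{n-2}$ with $|\alpha_j|<1$ and $\beta$ with $|\beta|=1$, the finite CMV matrix $\mathcal{C}(\alpha_0,\dots,\alpha_{n-2};\beta)$ of order $n$ is the $n\times n$ unitary matrix $\mathcal{L}\mathcal{M}$, where: if $n=2k+1$, $\mathcal{L}=\Theta(\alpha_0)\oplus\Theta(\alpha_2)\oplus\cdots\oplus\Theta(\alpha_{2k-2})\oplus\bar\beta$ and $\mathcal{M}=1\oplus\Theta(\alpha_1)\oplus\Theta(\alpha_3)\oplus\cdots\oplus\Theta(\alpha_{2k-1})$; if $n=2k$, $\mathcal{L}=\Theta(\alpha_0)\oplus\Theta(\alpha_2)\oplus\cdots\oplus\Theta(\alpha_{2k-2})$ and $\mathcal{M}=1\oplus\Theta(\alpha_1)\oplus\cdots\oplus\Theta(\alpha_{2k-3})\oplus\bar\beta$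 (here $1$ and $\bar\beta$ denote $1\times1$ blocks). Such a matrix has $n$ distinct eigenvalues $\zeta_1,\dots,\zeta_n\in\mathbb{T}$ with an orthonormal eigenbasis $h_1,\dots,h_n$ of $\mathbb{C}^n$. With $e_n$ the last standard basis vector of $\mathbb{C}^n$, the $n$-th spectral measure of $\mathcal{C}$ is $\sum_{j=1}^n|(h_j,e_n)|^2\,\delta(\zeta_j)$, i.e. the spectral measure of $\mathcal{C}$ associated with the vector $e_n$; $\delta(\zeta)$ denotes the unit point mass at $\zeta$. *)

theory Defs
  imports Complex_Main
begin

text \<open>Matrices of order n are represented as functions nat => nat => complex,
  with row/column indices 0..n-1; entries outside this range are 0.
  Vectors in C^n are functions nat => complex with indices 0..n-1.\<close>

definition rho :: "complex \<Rightarrow> complex" where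
  "rho a = complex_of_real (sqrt (1 - (cmod a)^2))"

definition Theta :: "complex \<Rightarrow> nat \<Rightarrow> nat \<Rightarrow> complex" where
  "Theta a r c = (if r = 0 \<and> c = 0 then cnj a
                  else if r = 1 \<and> c = 1 then - a
                  else rho a)"

text \<open>L = Theta(alpha_0) + Theta(alpha_2) + ... (+ cnj beta if n odd).\<close>
definition cmv_L :: "nat \<Rightarrow> (nat \<Rightarrow> complex) \<Rightarrow> complex \<Rightarrow> nat \<Rightarrow> nat \<Rightarrow> complex" where
  "cmv_L n \<alpha> \<beta> i j =
     (if i < n \<and> j < n then
        (if i div 2 = j div 2 \<and> 2 * (i div 2) + 1 < n
         then Theta (\<alpha> (2 * (i div 2))) (i mod 2) (j mod 2)
         else if i = n - 1 \<and> j = n - 1 \<and> odd n then cnj \<beta>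
         else 0)
      else 0)"

text \<open>M = 1 + Theta(alpha_1) + Theta(alpha_3) + ... (+ cnj beta if n even).\<close>
definition cmv_M :: "nat \<Rightarrow> (nat \<Rightarrow> complex) \<Rightarrow> complex \<Rightarrow> nat \<Rightarrow> nat \<Rightarrow> complex" where
  "cmv_M n \<alpha> \<beta> i j =
     (if i < n \<and> j < n then
        (if i = 0 \<and> j = 0 then 1
         else if 1 \<le> i \<and> 1 \<le> j \<and> (i - 1) div 2 = (j - 1) div 2
                 \<and> 2 * ((i - 1) div 2) + 2 < n
         then Theta (\<alpha> (2 * ((i - 1) div 2) + 1)) ((i - 1) mod 2) ((j - 1) mod 2)
         else if i = n - 1 \<and> j = n - 1 \<and> even n then cnj \<beta>
         else 0)
      else 0)"

definition cmv :: "nat \<Rightarrow> (nat \<Rightarrow> complex) \<Rightarrow> complex \<Rightarrow> nat \<Rightarrow> nat \<Rightarrow> complex" where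
  "cmv n \<alpha> \<beta> i j = (\<Sum>k<n. cmv_L n \<alpha> \<beta> i k * cmv_M n \<alpha> \<beta> k j)"

definition inner_n :: "nat \<Rightarrow> (nat \<Rightarrow> complex) \<Rightarrow> (nat \<Rightarrow> complex) \<Rightarrow> complex" where
  "inner_n n x y = (\<Sum>k<n. x k * cnj (y k))"

text \<open>A finitely supported (point-mass) measure on the circle is represented
  by its weight function w: w z is the mass at the point z.
  spectral_measure n U v w: there is an orthonormal eigenbasis h_0..h_{n-1}
  of U with eigenvalues zeta_0..zeta_{n-1} such that
  w = sum_j |(h_j, v)|^2 delta(zeta_j).\<close>
definition spectral_measure ::
  "nat \<Rightarrow> (nat \<Rightarrow> nat \<Rightarrow> complex) \<Rightarrow> (nat \<Rightarrow> complex) \<Rightarrow> (complex \<Rightarrow> real) \<Rightarrow> bool" where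
  "spectral_measure n U v w \<longleftrightarrow>
     (\<exists>h :: nat \<Rightarrow> nat \<Rightarrow> complex. \<exists>\<zeta> :: nat \<Rightarrow> complex.
        (\<forall>j<n. \<forall>i<n. (\<Sum>k<n. U i k * h j k) = \<zeta> j * h j i) \<and>
        (\<forall>j<n. \<forall>l<n. inner_n n (h j) (h l) = (if j = l then 1 else 0)) \<and>
        (\<forall>z. w z = (\<Sum>j\<in>{j. j < n \<and> \<zeta> j = z}. (cmod (inner_n n (h j) v))^2)))"

text \<open>Last standard basis vector e_n of C^n (index n-1).\<close>
definition e_last :: "nat \<Rightarrow> nat \<Rightarrow> complex" where
  "e_last n i = (if i = n - 1 then 1 else 0)"

end

theory Submission
  imports Defs
begin

definition nsq :: "nat \<Rightarrow> (nat \<Rightarrow> complex) \<Rightarrow> real" where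
  "nsq n x = (\<Sum>k<n. (cmod (x k))^2)"

definition orthon :: "nat \<Rightarrow> (nat \<Rightarrow> nat \<Rightarrow> complex) \<Rightarrow> bool" where
  "orthon n q \<longleftrightarrow> (\<forall>i<n. \<forall>j<n. inner_n n (q i) (q j) = (if i = j then 1 else 0))"

definition dlt :: "nat \<Rightarrow> nat \<Rightarrow> complex" where
  "dlt l k = (if k = l then 1 else 0)"

lemma if10_mult[simp]: "(if P then 1 else 0) * (x::complex) = (if P then x else 0)"
  "x * (if P then 1 else 0) = (if P then x else 0)" by auto

lemma cnj_if10[simp]: "cnj (if P then 1 else 0) = (if P then 1 else 0)" by auto

lemma zcnj: "z * cnj z = (complex_of_real (cmod z))^2" by (metis complex_norm_square of_real_power)

lemma inner_self: "inner_n n x x = of_real (nsq n x)"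
  unfolding inner_n_def nsq_def of_real_sum by (intro sum.cong refl) (metis complex_norm_square of_real_power)

lemma nsq_nonneg: "nsq n x \<ge> 0"
  unfolding nsq_def by (simp add: sum_nonneg)

lemma nsq_zero: "nsq n x = 0 \<Longrightarrow> k < n \<Longrightarrow> x k = 0"
  unfolding nsq_def by (subst (asm) sum_nonneg_eq_0_iff) auto

lemma inner_cnj: "inner_n n x y = cnj (inner_n n y x)"
  unfolding inner_n_def by (simp add: mult.commute)

lemma inner_sum_left:
  "inner_n n (\<lambda>k. \<Sum>i\<in>A. c i * v i k) z = (\<Sum>i\<in>A. c i * inner_n n (v i) z)"
  unfolding inner_n_def
  by (simp add: sum_distrib_right sum_distrib_left mult.assoc sum.swap[of _ A])

lemma inner_sum_right:
  "inner_n n z (\<lambda>k. \<Sum>i\<in>A. c i * v i k) = (\<Sum>i\<in>A. cnj (c i) * inner_n n z (v i))"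
  by (subst inner_cnj, subst inner_sum_left) (simp add: inner_cnj[of n z])

lemma inner_diff_left:
  "inner_n n (\<lambda>k. x k - y k) z = inner_n n x z - inner_n n y z"
  unfolding inner_n_def by (simp add: algebra_simps sum_subtractf)

lemma inner_diff_right:
  "inner_n n z (\<lambda>k. x k - y k) = inner_n n z x - inner_n n z y"
  unfolding inner_n_def by (simp add: algebra_simps sum_subtractf)

lemma inner_add_left:
  "inner_n n (\<lambda>k. x k + y k) z = inner_n n x z + inner_n n y z"
  unfolding inner_n_def by (simp add: algebra_simps sum.distrib)

lemma inner_add_right:
  "inner_n n z (\<lambda>k. x k + y k) = inner_n n z x + inner_n n z y"
  unfolding inner_n_def by (simp add: algebra_simps sum.distrib)

lemma inner_scale_left:
  "inner_n n (\<lambda>k. a * x k) z = a * inner_n n x z"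
  unfolding inner_n_def by (simp add: algebra_simps sum_distrib_left)

lemma inner_scale_right:
  "inner_n n z (\<lambda>k. a * x k) = cnj a * inner_n n z x"
  unfolding inner_n_def by (simp add: algebra_simps sum_distrib_left)

lemma inner_dlt_left: "l < n \<Longrightarrow> inner_n n (dlt l) z = cnj (z l)"
  unfolding inner_n_def dlt_def by simp

lemma inner_dlt_right: "l < n \<Longrightarrow> inner_n n z (dlt l) = z l"
  unfolding inner_n_def dlt_def by simp

lemma orthon_sum_delta:
  assumes "orthon n q" "m < n"
  shows "(\<Sum>i<n. c i * inner_n n (q i) (q m)) = c m"
proof -
  have "(\<Sum>i<n. c i * inner_n n (q i) (q m)) = (\<Sum>i<n. if i = m then c i else 0)"
    using assms by (intro sum.cong refl) (auto simp: orthon_def)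
  then show ?thesis using assms by simp
qed

lemma proj_orth:
  assumes "orthon n q" "m < n"
  shows "inner_n n (\<lambda>k. y k - (\<Sum>i<n. inner_n n y (q i) * q i k)) (q m) = 0"
proof -
  have "(\<Sum>i<n. inner_n n y (q i) * inner_n n (q i) (q m)) = inner_n n y (q m)"
    using orthon_sum_delta[OF assms, of "\<lambda>i. inner_n n y (q i)"] by simp
  then show ?thesis by (simp add: inner_diff_left inner_sum_left)
qed

lemma complete:
  assumes oq: "orthon n q" and l: "l < n"
  shows "(\<Sum>i<n. inner_n n y (q i) * q i l) = y l"
proof -
  define P where "P y m = y m - (\<Sum>i<n. inner_n n y (q i) * q i m)" for y m
  have orth: "inner_n n (P y) (q m) = 0" if "m < n" for y m
    unfolding P_def using proj_orth[OF oq that] .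
  have sq: "inner_n n (P y) (P y) = inner_n n (P y) y" for y
  proof -
    have "inner_n n (P y) (P y) = inner_n n (P y) y
        - inner_n n (P y) (\<lambda>k. \<Sum>i<n. inner_n n y (q i) * q i k)"
      unfolding P_def[abs_def] by (rule inner_diff_right)
    also have "inner_n n (P y) (\<lambda>k. \<Sum>i<n. inner_n n y (q i) * q i k) = 0"
      by (simp add: inner_sum_right orth)
    finally show ?thesis by simp
  qed
  have pd: "inner_n n (P (dlt m)) (dlt m) = 1 - of_real (\<Sum>i<n. (cmod (q i m))^2)" if "m < n" for m
  proof -
    have "inner_n n (P (dlt m)) (dlt m) = P (dlt m) m" using that by (simp add: inner_dlt_right)
    also have "\<dots> = 1 - (\<Sum>i<n. cnj (q i m) * q i m)"
      using that by (simp add: P_def inner_dlt_left dlt_def)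
    also have "(\<Sum>i<n. cnj (q i m) * q i m) = of_real (\<Sum>i<n. (cmod (q i m))^2)"
      unfolding of_real_sum by (intro sum.cong refl) (metis complex_norm_square mult.commute)
    finally show ?thesis .
  qed
  have "(\<Sum>m<n. nsq n (P (dlt m))) = (\<Sum>m<n. (1 - (\<Sum>i<n. (cmod (q i m))^2)))"
  proof (rule sum.cong[OF refl])
    fix m assume "m \<in> {..<n}"
    then have "of_real (nsq n (P (dlt m))) = (of_real (1 - (\<Sum>i<n. (cmod (q i m))^2)) :: complex)"
      using pd[of m] sq[of "dlt m"] by (simp add: inner_self[symmetric])
    then show "nsq n (P (dlt m)) = 1 - (\<Sum>i<n. (cmod (q i m))^2)" using of_real_eq_iff by blast
  qed
  also have "\<dots> = real n - (\<Sum>i<n. nsq n (q i))"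
    by (simp add: sum_subtractf nsq_def) (rule sum.swap)
  also have "(\<Sum>i<n. nsq n (q i)) = real n"
  proof -
    have "nsq n (q i) = 1" if "i < n" for i
    proof -
      have "of_real (nsq n (q i)) = (1::complex)" using oq that unfolding orthon_def
        by (simp add: inner_self[symmetric])
      then show ?thesis by (metis of_real_eq_1_iff)
    qed
    then show ?thesis by simp
  qed
  finally have "(\<Sum>m<n. nsq n (P (dlt m))) = 0" by simp
  then have z: "nsq n (P (dlt m)) = 0" if "m < n" for m
    using that by (subst (asm) sum_nonneg_eq_0_iff) (auto simp: nsq_nonneg)
  have "(\<Sum>m<n. y m * P (dlt m) l) = (\<Sum>m<n. y m * dlt m l) - (\<Sum>m<n. y m * (\<Sum>i<n. inner_n n (dlt m) (q i) * q i l))"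
    by (simp add: P_def algebra_simps sum_subtractf)
  also have "(\<Sum>m<n. y m * dlt m l) = y l" using l by (simp add: dlt_def)
  also have "(\<Sum>m<n. y m * (\<Sum>i<n. inner_n n (dlt m) (q i) * q i l))
      = (\<Sum>i<n. (\<Sum>m<n. y m * cnj (q i m)) * q i l)"
    by (simp add: inner_dlt_left sum_distrib_left sum_distrib_right mult_ac, subst sum.swap, simp)
  also have "\<dots> = (\<Sum>i<n. inner_n n y (q i) * q i l)" by (simp add: inner_n_def)
  finally have "P y l = (\<Sum>m<n. y m * P (dlt m) l)" by (simp add: P_def)
  also have "\<dots> = 0" using z nsq_zero l by (intro sum.neutral) auto
  finally show ?thesis unfolding P_def by simp
qed

lemma parseval [no_atp]:
  assumes "orthon n q"
  shows "(\<Sum>i<n. inner_n n x (q i) * cnj (inner_n n y (q i))) = inner_n n x y"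
proof -
  have "inner_n n x y = inner_n n x (\<lambda>l. \<Sum>i<n. inner_n n y (q i) * q i l)"
  proof -
    have "x l * cnj (y l) = x l * cnj (\<Sum>i<n. inner_n n y (q i) * q i l)" if "l \<in> {..<n}" for l
      using complete[OF assms, of l y] that by simp
    then show ?thesis unfolding inner_n_def by (rule sum.cong[OF refl])
  qed
  also have "\<dots> = (\<Sum>i<n. cnj (inner_n n y (q i)) * inner_n n x (q i))"
    by (rule inner_sum_right)
  finally show ?thesis by (simp add: mult.commute)
qed


definition dg :: "(nat \<Rightarrow> complex) \<Rightarrow> (nat \<Rightarrow> complex) \<Rightarrow> nat \<Rightarrow> complex" where
  "dg \<xi> x = (\<lambda>k. \<xi> k * x k)"

definition unitary_n :: "nat \<Rightarrow> (nat \<Rightarrow> nat \<Rightarrow> complex) \<Rightarrow> bool" where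
  "unitary_n n C \<longleftrightarrow>
     (\<forall>i<n. \<forall>j<n. (\<Sum>k<n. C i k * cnj (C j k)) = (if i = j then 1 else 0)) \<and>
     (\<forall>i<n. \<forall>j<n. (\<Sum>k<n. cnj (C k i) * C k j) = (if i = j then 1 else 0))"

definition matb :: "nat \<Rightarrow> (nat \<Rightarrow> complex) \<Rightarrow> (nat \<Rightarrow> nat \<Rightarrow> complex) \<Rightarrow> nat \<Rightarrow> nat \<Rightarrow> complex" where
  "matb n \<xi> q i j = (if i < n \<and> j < n then inner_n n (dg \<xi> (q j)) (q i) else 0)"

lemma inner_dg_move: "inner_n n (dg \<xi> x) y = inner_n n x (dg (\<lambda>k. cnj (\<xi> k)) y)"
  unfolding inner_n_def dg_def by (simp add: mult_ac)

lemma inner_dg_dg: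
  assumes "\<forall>k<n. cmod (\<xi> k) = 1"
  shows "inner_n n (dg \<xi> x) (dg \<xi> y) = inner_n n x y"
  unfolding inner_n_def dg_def
proof (intro sum.cong refl)
  fix k assume "k \<in> {..<n}"
  then have "\<xi> k * cnj (\<xi> k) = 1" using assms by (simp add: zcnj)
  then show "\<xi> k * x k * cnj (\<xi> k * y k) = x k * cnj (y k)"
    by (simp add: mult_ac)
qed

lemma matb_unitary:
  assumes oq: "orthon n q" and xi: "\<forall>k<n. cmod (\<xi> k) = 1"
  shows "unitary_n n (matb n \<xi> q)"
proof -
  have xi': "\<forall>k<n. cmod (cnj (\<xi> k)) = 1" using xi by simp
  have cc: "\<xi> = (\<lambda>k. cnj (cnj (\<xi> k)))" by simp
  have 1: "(\<Sum>k<n. matb n \<xi> q i k * cnj (matb n \<xi> q j k)) = (if i = j then 1 else 0)"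
    if "i < n" "j < n" for i j
  proof -
    have "(\<Sum>k<n. matb n \<xi> q i k * cnj (matb n \<xi> q j k))
        = (\<Sum>k<n. inner_n n (dg (\<lambda>k. cnj (\<xi> k)) (q j)) (q k) * cnj (inner_n n (dg (\<lambda>k. cnj (\<xi> k)) (q i)) (q k)))"
    proof (intro sum.cong refl)
      fix k assume k: "k \<in> {..<n}"
      have a: "inner_n n (dg \<xi> (q k)) (q i) = cnj (inner_n n (dg (\<lambda>k. cnj (\<xi> k)) (q i)) (q k))"
        by (subst inner_dg_move, rule inner_cnj)
      have b: "inner_n n (dg \<xi> (q k)) (q j) = cnj (inner_n n (dg (\<lambda>k. cnj (\<xi> k)) (q j)) (q k))"
        by (subst inner_dg_move, rule inner_cnj)
      show "matb n \<xi> q i k * cnj (matb n \<xi> q j k) = inner_n n (dg (\<lambda>k. cnj (\<xi> k)) (q j)) (q k) * cnj (inner_n n (dg (\<lambda>k. cnj (\<xi> k)) (q i)) (q k))"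
        using k that by (simp add: matb_def a b mult.commute)
    qed
    also have "\<dots> = inner_n n (dg (\<lambda>k. cnj (\<xi> k)) (q j)) (dg (\<lambda>k. cnj (\<xi> k)) (q i))"
      by (rule parseval[OF oq])
    also have "\<dots> = inner_n n (q j) (q i)" by (rule inner_dg_dg[OF xi'])
    finally show ?thesis using oq that unfolding orthon_def by auto
  qed
  have 2: "(\<Sum>k<n. cnj (matb n \<xi> q k i) * matb n \<xi> q k j) = (if i = j then 1 else 0)"
    if "i < n" "j < n" for i j
  proof -
    have "(\<Sum>k<n. cnj (matb n \<xi> q k i) * matb n \<xi> q k j)
        = (\<Sum>k<n. inner_n n (dg \<xi> (q j)) (q k) * cnj (inner_n n (dg \<xi> (q i)) (q k)))"
      using that by (intro sum.cong refl) (simp add: matb_def mult.commute)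
    also have "\<dots> = inner_n n (dg \<xi> (q j)) (dg \<xi> (q i))"
      by (rule parseval[OF oq])
    also have "\<dots> = inner_n n (q j) (q i)" by (rule inner_dg_dg[OF xi])
    finally show ?thesis using oq that unfolding orthon_def by auto
  qed
  show ?thesis unfolding unitary_n_def using 1 2 by blast
qed

lemma e_last_dlt: "e_last n = dlt (n - 1)"
  by (rule ext) (simp add: e_last_def dlt_def)

lemma matb_spectral:
  assumes oq: "orthon n q" and n: "n \<ge> 1"
  shows "spectral_measure n (matb n \<xi> q) (e_last n)
           (\<lambda>z. \<Sum>l\<in>{l. l < n \<and> \<xi> l = z}. (cmod (q (n - 1) l))^2)"
proof -
  define h where "h l i = (if i < n then cnj (q i l) else 0)" for l i
  have eig: "(\<Sum>k<n. matb n \<xi> q i k * h l k) = \<xi> l * h l i" if "l < n" "i < n" for l i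
  proof -
    have "(\<Sum>k<n. matb n \<xi> q i k * h l k) = (\<Sum>k<n. cnj (q k l) * inner_n n (dg \<xi> (q k)) (q i))"
      using that by (intro sum.cong refl) (simp add: matb_def h_def mult.commute)
    also have "\<dots> = inner_n n (\<lambda>t. \<Sum>k<n. cnj (q k l) * dg \<xi> (q k) t) (q i)"
      by (rule inner_sum_left[symmetric])
    also have "(\<lambda>t. \<Sum>k<n. cnj (q k l) * dg \<xi> (q k) t) = (\<lambda>t. \<xi> t * (\<Sum>k<n. inner_n n (dlt l) (q k) * q k t))"
      using that by (simp add: dg_def inner_dlt_left sum_distrib_left mult_ac)
    also have "inner_n n \<dots> (q i) = inner_n n (\<lambda>t. \<xi> l * dlt l t) (q i)"
    proof -
      have "\<xi> t * (\<Sum>k<n. inner_n n (dlt l) (q k) * q k t) * cnj (q i t) = \<xi> l * dlt l t * cnj (q i t)"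
        if "t \<in> {..<n}" for t
        using that by (simp add: complete[OF oq] dlt_def)
      then show ?thesis unfolding inner_n_def by (rule sum.cong[OF refl])
    qed
    also have "\<dots> = \<xi> l * cnj (q i l)" using that by (simp add: inner_scale_left inner_dlt_left)
    finally show ?thesis using that by (simp add: h_def)
  qed
  have ort: "inner_n n (h j) (h l) = (if j = l then 1 else 0)" if "j < n" "l < n" for j l
  proof -
    have "inner_n n (h j) (h l) = (\<Sum>i<n. inner_n n (dlt j) (q i) * cnj (inner_n n (dlt l) (q i)))"
    proof -
      have "h j i * cnj (h l i) = inner_n n (dlt j) (q i) * cnj (inner_n n (dlt l) (q i))"
        if "i \<in> {..<n}" for i
        using that \<open>j < n\<close> \<open>l < n\<close> by (simp add: h_def inner_dlt_left)
      then show ?thesis unfolding inner_n_def[of n "h j"] by (rule sum.cong[OF refl])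
    qed
    also have "\<dots> = inner_n n (dlt j) (dlt l)" by (rule parseval[OF oq])
    finally show ?thesis using that by (simp add: inner_dlt_right dlt_def)
  qed
  have w: "inner_n n (h j) (e_last n) = cnj (q (n - 1) j)" for j
  proof -
    have "inner_n n (h j) (e_last n) = inner_n n (h j) (dlt (n - 1))"
      by (simp add: e_last_dlt)
    also have "\<dots> = cnj (q (n - 1) j)" using n by (simp add: inner_dlt_right h_def)
    finally show ?thesis .
  qed
  show ?thesis unfolding spectral_measure_def
    apply (rule exI[of _ h], rule exI[of _ \<xi>])
    using eig ort by (simp add: w)
qed


lemma inner_cong: "(\<forall>t<n. x t = x' t) \<Longrightarrow> (\<forall>t<n. z t = z' t) \<Longrightarrow> inner_n n x z = inner_n n x' z'"
  unfolding inner_n_def by (intro sum.cong) auto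

lemma cyc:
  assumes inj: "inj_on \<eta> {..<n}" and vnz: "\<forall>k<n. v k \<noteq> 0" and Sv: "S v"
    and Sd: "\<And>x. S x \<Longrightarrow> S (dg \<eta> x)"
    and Sl: "\<And>x y a. S x \<Longrightarrow> S y \<Longrightarrow> S (\<lambda>t. x t + a * y t)"
    and Ss: "\<And>x a. S x \<Longrightarrow> S (\<lambda>t. a * x t)"
    and l: "l < n"
  shows "\<exists>x. S x \<and> (\<forall>t<n. x t = dlt l t)"
proof -
  have P: "S (\<lambda>t. (\<Prod>m\<in>A. (\<eta> t - \<eta> m)) * v t)" if "finite A" for A
    using that
  proof (induction A rule: finite_induct)
    case empty then show ?case using Sv by simp
  next
    case (insert m A)
    have "S (\<lambda>t. dg \<eta> (\<lambda>t. (\<Prod>m\<in>A. (\<eta> t - \<eta> m)) * v t) t + (- \<eta> m) * ((\<Prod>m\<in>A. (\<eta> t - \<eta> m)) * v t))"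
      using Sl[OF Sd[OF insert.IH] insert.IH] .
    moreover have "(\<lambda>t. dg \<eta> (\<lambda>t. (\<Prod>m\<in>A. (\<eta> t - \<eta> m)) * v t) t + (- \<eta> m) * ((\<Prod>m\<in>A. (\<eta> t - \<eta> m)) * v t))
       = (\<lambda>t. (\<Prod>m\<in>insert m A. (\<eta> t - \<eta> m)) * v t)"
      using insert by (auto simp: dg_def algebra_simps)
    ultimately show ?case by simp
  qed
  define A where "A = {..<n} - {l}"
  define w where "w t = (\<Prod>m\<in>A. (\<eta> t - \<eta> m)) * v t" for t
  have Sw: "S w" using P[of A] unfolding w_def A_def by simp
  have wl: "w l \<noteq> 0"
  proof -
    have "(\<Prod>m\<in>A. (\<eta> l - \<eta> m)) \<noteq> 0"
      using inj l by (auto simp: A_def inj_on_def)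
    then show ?thesis using vnz l by (simp add: w_def)
  qed
  have wt: "w t = 0" if "t < n" "t \<noteq> l" for t
  proof -
    have "t \<in> A" using that by (simp add: A_def)
    then have "(\<Prod>m\<in>A. (\<eta> t - \<eta> m)) = 0" by (intro prod_zero) (auto simp: A_def)
    then show ?thesis by (simp add: w_def)
  qed
  have "S (\<lambda>t. inverse (w l) * w t)" by (rule Ss[OF Sw])
  moreover have "\<forall>t<n. inverse (w l) * w t = dlt l t"
    using wl wt by (auto simp: dlt_def)
  ultimately show ?thesis by blast
qed

lemma trace_count:
  assumes I: "I \<subseteq> {..<n}"
    and orth: "\<forall>i\<in>I. \<forall>j\<in>I. inner_n n (q i) (q j) = (if i = j then 1 else 0)"
    and all: "\<forall>l<n. \<exists>x. (\<forall>t<n. x t = dlt l t) \<and> (\<forall>t<n. x t = (\<Sum>i\<in>I. inner_n n x (q i) * q i t))"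
  shows "card I = n"
proof -
  have fin: "finite I" using I finite_subset by blast
  have one: "(\<Sum>i\<in>I. (cmod (q i l))^2) = 1" if l: "l < n" for l
  proof -
    obtain x where x1: "\<forall>t<n. x t = dlt l t" and x2: "\<forall>t<n. x t = (\<Sum>i\<in>I. inner_n n x (q i) * q i t)"
      using all l by blast
    have "inner_n n x (q i) = cnj (q i l)" for i
    proof -
      have "inner_n n x (q i) = inner_n n (dlt l) (q i)" using x1 by (intro inner_cong) auto
      then show ?thesis using l by (simp add: inner_dlt_left)
    qed
    then have "(1::complex) = (\<Sum>i\<in>I. cnj (q i l) * q i l)" using x1 x2 l by (simp add: dlt_def)
    also have "\<dots> = of_real (\<Sum>i\<in>I. (cmod (q i l))^2)"
      unfolding of_real_sum by (intro sum.cong refl) (metis complex_norm_square mult.commute)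
    finally show ?thesis by (metis of_real_eq_1_iff)
  qed
  have "real n = (\<Sum>l<n. (\<Sum>i\<in>I. (cmod (q i l))^2))" using one by simp
  also have "\<dots> = (\<Sum>i\<in>I. nsq n (q i))" unfolding nsq_def by (rule sum.swap)
  also have "\<dots> = (\<Sum>i\<in>I. 1)"
  proof (intro sum.cong refl)
    fix i assume "i \<in> I"
    then have "of_real (nsq n (q i)) = (1::complex)" using orth by (simp add: inner_self[symmetric])
    then show "nsq n (q i) = 1" by (metis of_real_eq_1_iff)
  qed
  finally show ?thesis by simp
qed

locale cons =
  fixes n :: nat and \<xi> :: "nat \<Rightarrow> complex" and v :: "nat \<Rightarrow> complex"
  assumes n1: "n \<ge> 1" and xi1: "\<forall>k<n. cmod (\<xi> k) = 1" and inj: "inj_on \<xi> {..<n}"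
    and vnz: "\<forall>k<n. v k \<noteq> 0" and vn: "nsq n v = 1"
begin

definition eta :: "nat \<Rightarrow> nat \<Rightarrow> complex" where
  "eta k = (if even k then \<xi> else (\<lambda>t. cnj (\<xi> t)))"

definition sidx :: "nat \<Rightarrow> nat" where
  "sidx k = (if k + 2 \<le> n - 1 then k + 2 else n - 1)"

function chi :: "nat \<Rightarrow> nat \<Rightarrow> complex" where
  "chi k = (if n \<le> k + 1 then v else
     (\<lambda>t. (dg (eta k) (chi (sidx k)) t - (\<Sum>i\<in>{k+1..<n}. inner_n n (dg (eta k) (chi (sidx k))) (chi i) * chi i t))
          / of_real (sqrt (nsq n (\<lambda>t. dg (eta k) (chi (sidx k)) t - (\<Sum>i\<in>{k+1..<n}. inner_n n (dg (eta k) (chi (sidx k))) (chi i) * chi i t))))))"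
  by auto
termination by (relation "measure (\<lambda>k. n - k)") (auto simp: sidx_def)

declare chi.simps [simp del]

end

context cons begin

definition uu where "uu k = dg (eta k) (chi (sidx k))"
definition yv where "yv k = (\<lambda>t. uu k t - (\<Sum>i\<in>{k+1..<n}. inner_n n (uu k) (chi i) * chi i t))"
definition rr where "rr k = sqrt (nsq n (yv k))"

lemma chi_top: "n \<le> k + 1 \<Longrightarrow> chi k = v" by (simp add: chi.simps)
lemma chi_low: "k + 1 < n \<Longrightarrow> chi k = (\<lambda>t. yv k t / of_real (rr k))"
  by (subst chi.simps) (simp add: yv_def uu_def rr_def)

definition inF where "inF k y \<longleftrightarrow> (\<forall>t<n. y t = (\<Sum>i\<in>{k..<n}. inner_n n y (chi i) * chi i t))"
definition orth_from where "orth_from k \<longleftrightarrow> (\<forall>i j. k \<le> i \<longrightarrow> i < n \<longrightarrow> k \<le> j \<longrightarrow> j < n \<longrightarrow>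
   inner_n n (chi i) (chi j) = (if i = j then 1 else 0))"

lemma orth_from_mono: "orth_from k \<Longrightarrow> k \<le> k' \<Longrightarrow> orth_from k'"
  unfolding orth_from_def by auto

lemma inF_cong: "inF k x \<Longrightarrow> (\<forall>t<n. x t = x' t) \<Longrightarrow> inF k x'"
proof -
  assume a: "inF k x" "\<forall>t<n. x t = x' t"
  have "inner_n n x (chi i) = inner_n n x' (chi i)" for i using a(2) by (intro inner_cong) auto
  then show ?thesis using a unfolding inF_def by auto
qed

lemma inF_lin: "inF k x \<Longrightarrow> inF k y \<Longrightarrow> inF k (\<lambda>t. x t + a * y t)"
  unfolding inF_def
  by (simp add: inner_add_left inner_scale_left[of n a y] distrib_right sum.distrib sum_distrib_left mult.assoc)

lemma inF_zero: "inF k (\<lambda>t. 0)"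
  unfolding inF_def inner_n_def by simp

lemma inF_scale: "inF k x \<Longrightarrow> inF k (\<lambda>t. a * x t)"
  using inF_lin[OF inF_zero, of k x a] by simp

lemma inF_comb:
  assumes "orth_from k"
  shows "inF k (\<lambda>t. \<Sum>i\<in>{k..<n}. c i * chi i t)"
proof -
  have ip: "inner_n n (\<lambda>t. \<Sum>i\<in>{k..<n}. c i * chi i t) (chi j) = c j" if "j \<in> {k..<n}" for j
  proof -
    have "inner_n n (\<lambda>t. \<Sum>i\<in>{k..<n}. c i * chi i t) (chi j) = (\<Sum>i\<in>{k..<n}. c i * inner_n n (chi i) (chi j))"
      by (rule inner_sum_left)
    also have "\<dots> = (\<Sum>i\<in>{k..<n}. if i = j then c i else 0)"
      using assms that unfolding orth_from_def by (intro sum.cong refl) auto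
    also have "\<dots> = c j" using that by simp
    finally show ?thesis .
  qed
  show ?thesis unfolding inF_def using ip by simp
qed

lemma inF_chi: "orth_from k \<Longrightarrow> k \<le> i \<Longrightarrow> i < n \<Longrightarrow> inF k (chi i)"
proof -
  assume a: "orth_from k" "k \<le> i" "i < n"
  have "inF k (\<lambda>t. \<Sum>j\<in>{k..<n}. (if j = i then 1 else 0) * chi j t)" by (rule inF_comb[OF a(1)])
  moreover have "(\<lambda>t. \<Sum>j\<in>{k..<n}. (if j = i then 1 else 0) * chi j t) = chi i" using a by auto
  ultimately show ?thesis by simp
qed

lemma inF_orth: "inF m y \<Longrightarrow> (\<forall>i\<in>{m..<n}. inner_n n (chi i) (chi j) = 0) \<Longrightarrow> inner_n n y (chi j) = 0"
proof -
  assume a: "inF m y" "\<forall>i\<in>{m..<n}. inner_n n (chi i) (chi j) = 0"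
  have "inner_n n y (chi j) = inner_n n (\<lambda>t. \<Sum>i\<in>{m..<n}. inner_n n y (chi i) * chi i t) (chi j)"
    using a(1) unfolding inF_def by (intro inner_cong) auto
  also have "\<dots> = 0" using a(2) by (simp add: inner_sum_left)
  finally show ?thesis .
qed

lemma inF_mono: "orth_from k \<Longrightarrow> inF (Suc k) y \<Longrightarrow> inF k y"
proof (cases "k < n")
  case True
  assume a: "orth_from k" "inF (Suc k) y"
  have "inner_n n y (chi k) = 0"
    using a True by (intro inF_orth[OF a(2)]) (auto simp: orth_from_def)
  then show ?thesis using a(2) True unfolding inF_def by (simp add: sum.atLeast_Suc_lessThan)
next
  case False
  assume a: "orth_from k" "inF (Suc k) y"
  then show ?thesis using False unfolding inF_def by simp
qed

lemma inF_high: "n \<le> k \<Longrightarrow> inF k y \<Longrightarrow> t < n \<Longrightarrow> y t = 0"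
  unfolding inF_def by simp

lemma inF_split:
  assumes o: "orth_from (Suc k)" and k: "Suc k < n" and y: "inF (Suc k) y"
  shows "inF (Suc (Suc k)) (\<lambda>t. y t - inner_n n y (chi (Suc k)) * chi (Suc k) t)"
proof -
  define c where "c = inner_n n y (chi (Suc k))"
  have ip: "inner_n n (\<lambda>t. y t - c * chi (Suc k) t) (chi i) = inner_n n y (chi i)" if "i \<in> {Suc (Suc k)..<n}" for i
    using o that by (simp add: inner_diff_left inner_scale_left orth_from_def)
  show ?thesis unfolding inF_def c_def[symmetric]
  proof (intro allI impI)
    fix t assume t: "t < n"
    have "y t = (\<Sum>i\<in>{Suc k..<n}. inner_n n y (chi i) * chi i t)" using y t unfolding inF_def by auto
    also have "\<dots> = c * chi (Suc k) t + (\<Sum>i\<in>{Suc (Suc k)..<n}. inner_n n y (chi i) * chi i t)"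
      using k by (simp add: sum.atLeast_Suc_lessThan c_def)
    finally show "y t - c * chi (Suc k) t = (\<Sum>i\<in>{Suc (Suc k)..<n}. inner_n n (\<lambda>t. y t - c * chi (Suc k) t) (chi i) * chi i t)"
      using ip by simp
  qed
qed

lemma eta_inv: "t < n \<Longrightarrow> eta k t * eta (Suc k) t = 1"
  using xi1 by (auto simp: eta_def zcnj mult.commute)

lemma eta_SS: "eta (Suc (Suc k)) = eta k" by (simp add: eta_def)

lemma eta_inj: "inj_on (eta k) {..<n}"
  using inj by (auto simp: eta_def inj_on_def)

lemma dg_dg: "t < n \<Longrightarrow> dg (eta k) (dg (eta (Suc k)) x) t = x t"
  using eta_inv[of t k] by (simp add: dg_def mult.assoc[symmetric])

end

context cons begin

definition G2from where "G2from k \<longleftrightarrow> (\<forall>m. k \<le> m \<longrightarrow> Suc m < n \<longrightarrow> (\<forall>y. inF (Suc m) y \<longrightarrow> inF m (dg (eta m) y)))"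
definition G3from where "G3from k \<longleftrightarrow> (\<forall>m. k \<le> m \<longrightarrow> Suc m < n \<longrightarrow> rr m > 0)"

lemma core:
  assumes k: "Suc k < n" and o1: "orth_from (Suc k)"
    and G2: "G2from (Suc k)" and G3: "G3from (Suc k)"
    and Scong: "\<And>x x'. S x \<Longrightarrow> (\<forall>t<n. x t = x' t) \<Longrightarrow> S x'"
    and Sl: "\<And>x y a. S x \<Longrightarrow> S y \<Longrightarrow> S (\<lambda>t. x t + a * y t)"
    and Sinc: "\<And>y. inF (Suc k) y \<Longrightarrow> S y"
    and Su: "S (uu k)"
    and y: "inF (Suc k) y"
  shows "S (dg (eta k) y)"
proof -
  have S0: "S (\<lambda>t. 0)" using Scong[OF Sl[OF Su Su, of "-1"]] by simp
  have Ss: "S (\<lambda>t. a * x t)" if "S x" for a x using Scong[OF Sl[OF S0 that, of a]] by simp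
  have Sa: "S (dg (eta k) y')" if y': "inF (Suc (Suc k)) y'" for y'
  proof (cases "n \<le> Suc (Suc k)")
    case True
    then have "\<forall>t<n. 0 = dg (eta k) y' t" using inF_high[OF True y'] by (simp add: dg_def)
    then show ?thesis using Scong[OF S0] by blast
  next
    case False
    have o2: "orth_from (Suc (Suc k))" using orth_from_mono[OF o1] by simp
    define c where "c = inner_n n y' (chi (Suc (Suc k)))"
    define y'' where "y'' t = y' t - c * chi (Suc (Suc k)) t" for t
    have y'': "inF (Suc (Suc (Suc k))) y''"
      using inF_split[OF o2 _ y'] False unfolding y''_def c_def by simp
    have sk: "sidx k = Suc (Suc k)" using False by (simp add: sidx_def)
    have d'': "inF (Suc (Suc k)) (dg (eta k) y'')"
    proof (cases "Suc (Suc (Suc k)) < n")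
      case True
      then have "inF (Suc (Suc k)) (dg (eta (Suc (Suc k))) y'')"
        using G2 y'' unfolding G2from_def by auto
      then show ?thesis by (simp add: eta_SS)
    next
      case False
      then have "\<forall>t<n. 0 = dg (eta k) y'' t" using inF_high[OF _ y''] by (simp add: dg_def)
      then show ?thesis using inF_cong[OF inF_zero] by blast
    qed
    have "S (\<lambda>t. dg (eta k) y'' t + c * uu k t)"
      using Sl[OF Sinc[OF inF_mono[OF o1 d'']] Su] .
    moreover have "\<forall>t<n. dg (eta k) y'' t + c * uu k t = dg (eta k) y' t"
      by (simp add: uu_def sk dg_def y''_def algebra_simps)
    ultimately show ?thesis using Scong by blast
  qed
  have Sb: "S (dg (eta k) (chi (Suc k)))"
  proof (cases "Suc (Suc k) = n")
    case True
    then have "sidx k = Suc k" by (auto simp: sidx_def)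
    then show ?thesis using Su by (simp add: uu_def)
  next
    case False
    then have k2: "Suc (Suc k) < n" using k by simp
    have r: "rr (Suc k) > 0" using G3 k2 unfolding G3from_def by auto
    have o2: "orth_from (Suc (Suc k))" using orth_from_mono[OF o1] by simp
    define z where "z t = (\<Sum>i\<in>{Suc (Suc k)..<n}. inner_n n (uu (Suc k)) (chi i) * chi i t)" for t
    have z: "inF (Suc (Suc k)) z" unfolding z_def by (rule inF_comb[OF o2])
    define s where "s = sidx (Suc k)"
    have s: "Suc k \<le> s" "s < n" using k2 by (auto simp: s_def sidx_def)
    have Schi: "S (chi s)" using Sinc[OF inF_chi[OF o1 s]] .
    have "S (\<lambda>t. (1 / of_real (rr (Suc k))) * chi s t + (- 1 / of_real (rr (Suc k))) * dg (eta k) z t)"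
      using Sl[OF Ss[OF Schi] Sa[OF z]] .
    moreover have "\<forall>t<n. (1 / of_real (rr (Suc k))) * chi s t + (- 1 / of_real (rr (Suc k))) * dg (eta k) z t
        = dg (eta k) (chi (Suc k)) t"
    proof (intro allI impI)
      fix t assume t: "t < n"
      have "dg (eta k) (chi (Suc k)) t = eta k t * ((uu (Suc k) t - z t) / of_real (rr (Suc k)))"
        using k2 by (simp add: chi_low dg_def yv_def z_def)
      also have "eta k t * uu (Suc k) t = chi s t"
        using dg_dg[OF t] by (simp add: uu_def s_def dg_def)
      then have "eta k t * ((uu (Suc k) t - z t) / of_real (rr (Suc k)))
          = (chi s t - eta k t * z t) / of_real (rr (Suc k))"
        by (simp add: algebra_simps diff_divide_distrib)
      finally show "(1 / of_real (rr (Suc k))) * chi s t + (- 1 / of_real (rr (Suc k))) * dg (eta k) z t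
        = dg (eta k) (chi (Suc k)) t" by (simp add: dg_def diff_divide_distrib)
    qed
    ultimately show ?thesis using Scong by blast
  qed
  define c where "c = inner_n n y (chi (Suc k))"
  have y': "inF (Suc (Suc k)) (\<lambda>t. y t - c * chi (Suc k) t)"
    unfolding c_def by (rule inF_split[OF o1 k y])
  have "S (\<lambda>t. dg (eta k) (\<lambda>t. y t - c * chi (Suc k) t) t + c * dg (eta k) (chi (Suc k)) t)"
    using Sl[OF Sa[OF y'] Sb] .
  moreover have "\<forall>t<n. dg (eta k) (\<lambda>t. y t - c * chi (Suc k) t) t + c * dg (eta k) (chi (Suc k)) t = dg (eta k) y t"
    by (simp add: dg_def algebra_simps)
  ultimately show ?thesis using Scong by blast
qed

lemma stepL:
  assumes k: "Suc k < n" and o1: "orth_from (Suc k)" and G2: "G2from (Suc k)" and G3: "G3from (Suc k)"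
  shows "rr k > 0 \<and> orth_from k \<and> G2from k \<and> G3from k"
proof -
  have rpos: "rr k > 0"
  proof (rule ccontr)
    assume "\<not> rr k > 0"
    then have "nsq n (yv k) = 0" using nsq_nonneg[of n "yv k"] by (simp add: rr_def)
    then have y0: "yv k t = 0" if "t < n" for t using nsq_zero that by blast
    have uF: "inF (Suc k) (uu k)" unfolding inF_def
    proof (intro allI impI)
      fix t assume "t < n"
      then show "uu k t = (\<Sum>i\<in>{Suc k..<n}. inner_n n (uu k) (chi i) * chi i t)"
        using y0[of t] by (simp add: yv_def)
    qed
    have inv: "inF (Suc k) (dg (eta k) y)" if "inF (Suc k) y" for y
      by (rule core[OF k o1 G2 G3 inF_cong inF_lin _ uF that])
    have Sv: "inF (Suc k) v"
    proof -
      have "inF (Suc k) (chi (n - 1))" using inF_chi[OF o1, of "n - 1"] k by simp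
      then show ?thesis using chi_top[of "n - 1"] by simp
    qed
    have "\<forall>l<n. \<exists>x. (\<forall>t<n. x t = dlt l t) \<and> (\<forall>t<n. x t = (\<Sum>i\<in>{Suc k..<n}. inner_n n x (chi i) * chi i t))"
    proof (intro allI impI)
      fix l assume l: "l < n"
      obtain x where "inF (Suc k) x" "\<forall>t<n. x t = dlt l t"
        using cyc[OF eta_inj[of k] vnz Sv inv inF_lin inF_scale l] by blast
      then show "\<exists>x. (\<forall>t<n. x t = dlt l t) \<and> (\<forall>t<n. x t = (\<Sum>i\<in>{Suc k..<n}. inner_n n x (chi i) * chi i t))"
        unfolding inF_def by blast
    qed
    moreover have "\<forall>i\<in>{Suc k..<n}. \<forall>j\<in>{Suc k..<n}. inner_n n (chi i) (chi j) = (if i = j then 1 else 0)"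
      using o1 unfolding orth_from_def by auto
    ultimately have "card {Suc k..<n} = n"
      by (intro trace_count) auto
    then show False using k by simp
  qed
  have rne: "(of_real (rr k) :: complex) \<noteq> 0" using rpos by simp
  have ck: "chi k = (\<lambda>t. (1 / of_real (rr k)) * yv k t)"
    using chi_low[of k] k by simp
  have yo: "inner_n n (yv k) (chi j) = 0" if "j \<in> {Suc k..<n}" for j
  proof -
    have "(\<Sum>i\<in>{Suc k..<n}. inner_n n (uu k) (chi i) * inner_n n (chi i) (chi j))
        = (\<Sum>i\<in>{Suc k..<n}. if i = j then inner_n n (uu k) (chi i) else 0)"
      using o1 that unfolding orth_from_def by (intro sum.cong refl) auto
    then show ?thesis using that unfolding yv_def by (simp add: inner_diff_left inner_sum_left)
  qed
  have ckj: "inner_n n (chi k) (chi j) = 0" if "j \<in> {Suc k..<n}" for j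
    using yo[OF that] unfolding ck inner_scale_left by simp
  have ckk: "inner_n n (chi k) (chi k) = 1"
  proof -
    have "inner_n n (chi k) (chi k) = (1 / of_real (rr k)) * cnj (1 / of_real (rr k)) * of_real (nsq n (yv k))"
      by (simp only: ck inner_scale_left inner_scale_right inner_self mult.assoc)
    also have "of_real (nsq n (yv k)) = (of_real (rr k))^2"
      using nsq_nonneg[of n "yv k"] by (simp add: rr_def flip: of_real_power)
    finally show ?thesis using rne by (simp add: power2_eq_square)
  qed
  have ok: "orth_from k"
    unfolding orth_from_def
  proof (intro allI impI)
    fix i j assume a: "k \<le> i" "i < n" "k \<le> j" "j < n"
    show "inner_n n (chi i) (chi j) = (if i = j then 1 else 0)"
    proof (cases "i = k")
      case True
      then show ?thesis using ckk ckj[of j] a by (cases "j = k") auto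
    next
      case False
      note iF = False
      show ?thesis
      proof (cases "j = k")
        case True
        then have "inner_n n (chi i) (chi j) = cnj (inner_n n (chi k) (chi i))"
          by (simp add: inner_cnj[of n "chi i"])
        then show ?thesis using ckj[of i] a iF True by simp
      next
        case False
        then show ?thesis using o1 a iF unfolding orth_from_def by auto
      qed
    qed
  qed
  have uk: "inF k (uu k)"
  proof -
    define c where "c i = (if i = k then of_real (rr k) else inner_n n (uu k) (chi i))" for i
    have "inF k (\<lambda>t. \<Sum>i\<in>{k..<n}. c i * chi i t)" by (rule inF_comb[OF ok])
    moreover have "\<forall>t<n. (\<Sum>i\<in>{k..<n}. c i * chi i t) = uu k t"
    proof (intro allI impI)
      fix t assume t: "t < n"
      have "(\<Sum>i\<in>{k..<n}. c i * chi i t) = c k * chi k t + (\<Sum>i\<in>{Suc k..<n}. c i * chi i t)"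
        using k by (simp add: sum.atLeast_Suc_lessThan)
      also have "(\<Sum>i\<in>{Suc k..<n}. c i * chi i t) = (\<Sum>i\<in>{Suc k..<n}. inner_n n (uu k) (chi i) * chi i t)"
        by (intro sum.cong refl) (auto simp: c_def)
      also have "c k * chi k t = yv k t" using rne by (simp add: c_def ck)
      finally show "(\<Sum>i\<in>{k..<n}. c i * chi i t) = uu k t" by (simp add: yv_def)
    qed
    ultimately show ?thesis using inF_cong by blast
  qed
  have g2: "inF k (dg (eta k) y)" if "inF (Suc k) y" for y
    by (rule core[OF k o1 G2 G3 inF_cong inF_lin inF_mono[OF ok] uk that])
  have "G2from k" using G2 g2 unfolding G2from_def by (metis le_antisym not_less_eq_eq)
  moreover have "G3from k" using G3 rpos unfolding G3from_def by (metis le_antisym not_less_eq_eq)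
  ultimately show ?thesis using rpos ok by blast
qed

lemma good: "k \<le> n - 1 \<Longrightarrow> orth_from k \<and> G2from k \<and> G3from k"
proof (induction k rule: inc_induct)
  case base
  have "inner_n n v v = 1" using vn by (simp add: inner_self)
  then have "orth_from (n - 1)" unfolding orth_from_def
  proof (intro allI impI)
    fix i j assume "inner_n n v v = 1" "n - 1 \<le> i" "i < n" "n - 1 \<le> j" "j < n"
    moreover then have "i = n - 1" "j = n - 1" by auto
    ultimately show "inner_n n (chi i) (chi j) = (if i = j then 1 else 0)" using chi_top[of "n - 1"] n1 by simp
  qed
  moreover have "G2from (n - 1)" "G3from (n - 1)" unfolding G2from_def G3from_def by auto
  ultimately show ?case by blast
next
  case (step k)
  then have "Suc k < n" by simp
  then show ?case using step.IH stepL[of k] by blast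
qed

lemma orth_all: "orthon n chi"
  using good[of 0] unfolding orth_from_def orthon_def by auto

lemma rr_pos: "Suc k < n \<Longrightarrow> rr k > 0"
  using good[of 0] unfolding G3from_def by auto

lemma uu_chi: "Suc k < n \<Longrightarrow> inner_n n (uu k) (chi k) = of_real (rr k)"
proof -
  assume k: "Suc k < n"
  have o: "orth_from 0" using good[of 0] by simp
  have rne: "(of_real (rr k) :: complex) \<noteq> 0" using rr_pos[OF k] by simp
  have "inner_n n (uu k) (chi k) = inner_n n (\<lambda>t. yv k t + (\<Sum>i\<in>{k+1..<n}. inner_n n (uu k) (chi i) * chi i t)) (chi k)"
    by (simp add: yv_def)
  also have "\<dots> = inner_n n (yv k) (chi k) + (\<Sum>i\<in>{k+1..<n}. inner_n n (uu k) (chi i) * inner_n n (chi i) (chi k))"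
    by (simp add: inner_add_left inner_sum_left)
  also have "(\<Sum>i\<in>{k+1..<n}. inner_n n (uu k) (chi i) * inner_n n (chi i) (chi k)) = 0"
    using o unfolding orth_from_def by (intro sum.neutral) auto
  also have "yv k = (\<lambda>t. of_real (rr k) * chi k t)" using k rne by (simp add: chi_low)
  also have "inner_n n (\<lambda>t. of_real (rr k) * chi k t) (chi k) = of_real (rr k)"
    using o k unfolding orth_from_def by (simp add: inner_scale_left)
  finally show ?thesis by simp
qed

end

definition mm :: "nat \<Rightarrow> (nat \<Rightarrow> nat \<Rightarrow> complex) \<Rightarrow> (nat \<Rightarrow> nat \<Rightarrow> complex) \<Rightarrow> nat \<Rightarrow> nat \<Rightarrow> complex" where
  "mm n A B i j = (\<Sum>k<n. A i k * B k j)"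

definition adj :: "(nat \<Rightarrow> nat \<Rightarrow> complex) \<Rightarrow> nat \<Rightarrow> nat \<Rightarrow> complex" where
  "adj A i j = cnj (A j i)"

definition idm :: "nat \<Rightarrow> nat \<Rightarrow> nat \<Rightarrow> complex" where
  "idm n i j = (if i < n \<and> j = i then 1 else 0)"

definition bnd :: "nat \<Rightarrow> (nat \<Rightarrow> nat \<Rightarrow> complex) \<Rightarrow> bool" where
  "bnd n A \<longleftrightarrow> (\<forall>i j. n \<le> i \<or> n \<le> j \<longrightarrow> A i j = 0)"

definition ext1 :: "(nat \<Rightarrow> nat \<Rightarrow> complex) \<Rightarrow> nat \<Rightarrow> nat \<Rightarrow> complex" where
  "ext1 X i j = (if i = 0 \<and> j = 0 then 1 else if 0 < i \<and> 0 < j then X (i - 1) (j - 1) else 0)"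

definition Gm :: "nat \<Rightarrow> complex \<Rightarrow> nat \<Rightarrow> nat \<Rightarrow> complex" where
  "Gm n a i j = (if i < n \<and> j < n then (if i < 2 \<and> j < 2 then Theta a i j else if i = j then 1 else 0) else 0)"

lemma mm_assoc: "mm n (mm n A B) C = mm n A (mm n B C)"
proof (intro ext)
  fix i j
  have "mm n (mm n A B) C i j = (\<Sum>l<n. \<Sum>k<n. A i k * B k l * C l j)"
    by (simp add: mm_def sum_distrib_right)
  also have "\<dots> = (\<Sum>k<n. \<Sum>l<n. A i k * B k l * C l j)" by (rule sum.swap)
  also have "\<dots> = mm n A (mm n B C) i j"
    by (simp add: mm_def sum_distrib_left mult.assoc)
  finally show "mm n (mm n A B) C i j = mm n A (mm n B C) i j" .
qed

lemma sum_delta_conj: "(\<Sum>k<(n::nat). if P \<and> k = i then f k else 0) = (if P \<and> i < n then f i else (0::complex))"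
  by (cases P) simp_all

lemma mm_idl: "bnd n A \<Longrightarrow> mm n (idm n) A = A"
  by (intro ext) (auto simp: mm_def idm_def bnd_def sum_delta_conj)

lemma mm_idr: "bnd n A \<Longrightarrow> mm n A (idm n) = A"
proof (intro ext)
  fix i j assume "bnd n A"
  have "(\<Sum>k<n. A i k * (if k < n \<and> j = k then 1 else 0)) = (\<Sum>k<n. if j < n \<and> k = j then A i k else 0)"
    by (intro sum.cong) auto
  then show "mm n A (idm n) i j = A i j" using \<open>bnd n A\<close>
    by (auto simp: mm_def idm_def bnd_def sum_delta_conj)
qed

lemma bnd_mm: "bnd n A \<Longrightarrow> bnd n B \<Longrightarrow> bnd n (mm n A B)"
  by (auto simp: bnd_def mm_def)

lemma bnd_adj: "bnd n A \<Longrightarrow> bnd n (adj A)"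
  by (auto simp: bnd_def adj_def)

lemma unitary_mm_iff: "unitary_n n A \<longleftrightarrow>
   (\<forall>i<n. \<forall>j<n. mm n A (adj A) i j = idm n i j) \<and> (\<forall>i<n. \<forall>j<n. mm n (adj A) A i j = idm n i j)"
  unfolding unitary_n_def mm_def adj_def idm_def by auto

lemma unitary_eq: "unitary_n n A \<Longrightarrow> bnd n A \<Longrightarrow> mm n A (adj A) = idm n \<and> mm n (adj A) A = idm n"
proof -
  assume u: "unitary_n n A" and b: "bnd n A"
  have b1: "bnd n (mm n A (adj A))" "bnd n (mm n (adj A) A)" using b by (auto intro: bnd_mm bnd_adj)
  show ?thesis
  proof
    show "mm n A (adj A) = idm n"
    proof (intro ext)
      fix i j show "mm n A (adj A) i j = idm n i j"
        using u b1(1) unfolding unitary_mm_iff bnd_def by (cases "i < n \<and> j < n") (auto simp: idm_def)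
    qed
    show "mm n (adj A) A = idm n"
    proof (intro ext)
      fix i j show "mm n (adj A) A i j = idm n i j"
        using u b1(2) unfolding unitary_mm_iff bnd_def by (cases "i < n \<and> j < n") (auto simp: idm_def)
    qed
  qed
qed

lemma adj_mm: "adj (mm n A B) = mm n (adj B) (adj A)"
  by (intro ext) (simp add: adj_def mm_def mult.commute)

lemma unitary_mult:
  assumes "unitary_n n A" "bnd n A" "unitary_n n B" "bnd n B"
  shows "unitary_n n (mm n A B)"
proof -
  have a: "mm n A (adj A) = idm n" "mm n (adj A) A = idm n" using unitary_eq assms(1,2) by auto
  have b: "mm n B (adj B) = idm n" "mm n (adj B) B = idm n" using unitary_eq assms(3,4) by auto
  have "mm n (mm n A B) (adj (mm n A B)) = mm n A (mm n (mm n B (adj B)) (adj A))"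
    by (simp only: adj_mm mm_assoc)
  also have "\<dots> = idm n" by (simp add: b mm_idl bnd_adj assms a)
  finally have 1: "mm n (mm n A B) (adj (mm n A B)) = idm n" .
  have "mm n (adj (mm n A B)) (mm n A B) = mm n (adj B) (mm n (mm n (adj A) A) B)"
    by (simp only: adj_mm mm_assoc)
  also have "\<dots> = idm n" by (simp add: a mm_idl assms b)
  finally have 2: "mm n (adj (mm n A B)) (mm n A B) = idm n" .
  from 1 2 show ?thesis unfolding unitary_mm_iff by simp
qed

lemma Theta_sym: "r < 2 \<Longrightarrow> c < 2 \<Longrightarrow> Theta a r c = Theta a c r"
  by (auto simp: Theta_def)

lemma cmv_L_sym: "cmv_L n \<alpha> \<beta> i j = cmv_L n \<alpha> \<beta> j i"
  unfolding cmv_L_def by (auto intro: Theta_sym)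

lemma cmv_M_sym: "cmv_M n \<alpha> \<beta> i j = cmv_M n \<alpha> \<beta> j i"
  unfolding cmv_M_def by (auto intro: Theta_sym)

lemma bnd_L: "bnd n (cmv_L n \<alpha> \<beta>)" by (auto simp: bnd_def cmv_L_def)
lemma bnd_M: "bnd n (cmv_M n \<alpha> \<beta>)" by (auto simp: bnd_def cmv_M_def)
lemma bnd_cmv: "bnd n (cmv n \<alpha> \<beta>)" by (auto simp: bnd_def cmv_def cmv_L_def cmv_M_def)

lemma cmv_mm: "cmv n \<alpha> \<beta> = mm n (cmv_L n \<alpha> \<beta>) (cmv_M n \<alpha> \<beta>)"
  by (intro ext) (simp add: cmv_def mm_def)

lemma mm_ext1:
  assumes "bnd m X" "bnd m Y"
  shows "mm (Suc m) (ext1 X) (ext1 Y) = ext1 (mm m X Y)"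
proof (intro ext)
  fix i j
  have "mm (Suc m) (ext1 X) (ext1 Y) i j = ext1 X i 0 * ext1 Y 0 j + (\<Sum>k<m. ext1 X i (Suc k) * ext1 Y (Suc k) j)"
    unfolding mm_def by (rule sum.lessThan_Suc_shift)
  then show "mm (Suc m) (ext1 X) (ext1 Y) i j = ext1 (mm m X Y) i j"
    using assms by (auto simp: ext1_def mm_def bnd_def)
qed

lemma cmvM_ext:
  assumes "1 \<le> m"
  shows "cmv_M (Suc m) \<alpha> \<beta> = ext1 (cmv_L m (\<lambda>j. \<alpha> (Suc j)) \<beta>)"
proof (intro ext)
  fix i j
  show "cmv_M (Suc m) \<alpha> \<beta> i j = ext1 (cmv_L m (\<lambda>j. \<alpha> (Suc j)) \<beta>) i j"
  proof (cases "i = 0 \<or> j = 0")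
    case True
    then show ?thesis using assms by (auto simp: cmv_M_def ext1_def cmv_L_def)
  next
    case False
    then obtain i' j' where ij: "i = Suc i'" "j = Suc j'" by (metis not0_implies_Suc)
    have e1: "(2 * (i' div 2) + 2 < Suc m) = (2 * (i' div 2) + 1 < m)" by arith
    have e2: "Suc (2 * (i' div 2)) = 2 * (i' div 2) + 1" by simp
    show ?thesis using assms unfolding ij cmv_M_def ext1_def cmv_L_def
      by (auto simp: e1)
  qed
qed


lemma sum_two_shift: "(\<Sum>k<Suc (Suc m). g k) = g 0 + g 1 + (\<Sum>k<m. g (Suc (Suc k)))"
  by (simp add: sum.lessThan_Suc_shift add.assoc del: sum.lessThan_Suc)

lemma mm_G:
  assumes "2 \<le> N"
  shows "mm N (Gm N a) X i j = (if i < 2 then Theta a i 0 * X 0 j + Theta a i 1 * X 1 j else if i < N then X i j else 0)"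
proof -
  obtain m where N: "N = Suc (Suc m)" using assms by (metis add_2_eq_Suc le_Suc_ex)
  show ?thesis
  proof (cases "i < 2")
    case True
    then show ?thesis unfolding mm_def N sum_two_shift by (simp add: Gm_def)
  next
    case False
    have "mm N (Gm N a) X i j = (\<Sum>k<N. if i < N \<and> k = i then X k j else 0)"
      unfolding mm_def using False by (intro sum.cong refl) (auto simp: Gm_def)
    then show ?thesis using False by (simp add: sum_delta_conj)
  qed
qed

lemma cmvL_ext:
  assumes m: "1 \<le> m"
  shows "cmv_L (Suc m) \<alpha> \<beta> = mm (Suc m) (Gm (Suc m) (\<alpha> 0)) (ext1 (cmv_M m (\<lambda>j. \<alpha> (Suc j)) \<beta>))"
proof (intro ext)
  fix i j
  have N: "2 \<le> Suc m" using m by simp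
  show "cmv_L (Suc m) \<alpha> \<beta> i j = mm (Suc m) (Gm (Suc m) (\<alpha> 0)) (ext1 (cmv_M m (\<lambda>j. \<alpha> (Suc j)) \<beta>)) i j"
    unfolding mm_G[OF N]
  proof (cases "i < 2")
    case True
    consider "j = 0" | "j = 1" | "j \<ge> 2" by arith
    then show "cmv_L (Suc m) \<alpha> \<beta> i j = (if i < 2 then Theta (\<alpha> 0) i 0 * ext1 (cmv_M m (\<lambda>j. \<alpha> (Suc j)) \<beta>) 0 j +
            Theta (\<alpha> 0) i 1 * ext1 (cmv_M m (\<lambda>j. \<alpha> (Suc j)) \<beta>) 1 j
       else if i < Suc m then ext1 (cmv_M m (\<lambda>j. \<alpha> (Suc j)) \<beta>) i j else 0)"
    proof cases
      case 1 then show ?thesis using True m by (auto simp: cmv_L_def ext1_def cmv_M_def)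
    next
      case 2 then show ?thesis using True m by (auto simp: cmv_L_def ext1_def cmv_M_def)
    next
      case 3
      have "(i div 2 = j div 2) = False" using True 3 by auto
      then show ?thesis using True m 3 by (auto simp: cmv_L_def ext1_def cmv_M_def)
    qed
  next
    case False
    then obtain i' where i: "i = Suc (Suc i')" by (metis add_2_eq_Suc le_Suc_ex not_less)
    have d: "i div 2 = Suc (i' div 2)" "i mod 2 = i' mod 2" using i by auto
    show "cmv_L (Suc m) \<alpha> \<beta> i j = (if i < 2 then Theta (\<alpha> 0) i 0 * ext1 (cmv_M m (\<lambda>j. \<alpha> (Suc j)) \<beta>) 0 j +
            Theta (\<alpha> 0) i 1 * ext1 (cmv_M m (\<lambda>j. \<alpha> (Suc j)) \<beta>) 1 j
       else if i < Suc m then ext1 (cmv_M m (\<lambda>j. \<alpha> (Suc j)) \<beta>) i j else 0)"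
    proof (cases "j < 2")
      case True
      then show ?thesis using False m i by (auto simp: cmv_L_def ext1_def cmv_M_def)
    next
      case False
      then obtain j' where j: "j = Suc (Suc j')" by (metis add_2_eq_Suc le_Suc_ex not_less)
      have dj: "j div 2 = Suc (j' div 2)" "j mod 2 = j' mod 2" using j by auto
      have e: "(2 * (i' div 2) + 2 < m) = (2 * Suc (i' div 2) + 1 < Suc m)" by arith
      have e2: "(Suc j' = m - Suc 0) = (Suc (Suc j') = m)" "(Suc i' = m - Suc 0) = (Suc (Suc i') = m)"
        using m by arith+
      show ?thesis using m unfolding i j ext1_def cmv_M_def cmv_L_def
        by (simp add: d[unfolded i] dj[unfolded j] e e2)
    qed
  qed
qed

lemma cmv_factor:
  assumes m: "1 \<le> m"
  shows "cmv (Suc m) \<alpha> \<beta> = mm (Suc m) (Gm (Suc m) (\<alpha> 0)) (ext1 (\<lambda>i j. cmv m (\<lambda>j. \<alpha> (Suc j)) \<beta> j i))"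
proof -
  let ?L = "cmv_L m (\<lambda>j. \<alpha> (Suc j)) \<beta>" and ?M = "cmv_M m (\<lambda>j. \<alpha> (Suc j)) \<beta>"
  have "cmv (Suc m) \<alpha> \<beta> = mm (Suc m) (mm (Suc m) (Gm (Suc m) (\<alpha> 0)) (ext1 ?M)) (ext1 ?L)"
    by (simp add: cmv_mm cmvL_ext[OF m] cmvM_ext[OF m])
  also have "\<dots> = mm (Suc m) (Gm (Suc m) (\<alpha> 0)) (ext1 (mm m ?M ?L))"
    by (simp add: mm_assoc mm_ext1 bnd_L bnd_M)
  also have "mm m ?M ?L = (\<lambda>i j. cmv m (\<lambda>j. \<alpha> (Suc j)) \<beta> j i)"
    by (intro ext) (simp add: mm_def cmv_def cmv_L_sym[of m _ _ _ ] cmv_M_sym[of m] mult.commute)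
  finally show ?thesis .
qed

lemma rho_sq: "cmod a \<le> 1 \<Longrightarrow> rho a * cnj (rho a) = 1 - a * cnj a"
proof -
  assume a: "cmod a \<le> 1"
  have "0 \<le> 1 - (cmod a)^2" using a by (simp add: power_le_one)
  then have "rho a * cnj (rho a) = of_real (1 - (cmod a)^2)"
    by (simp add: rho_def flip: of_real_mult)
  also have "\<dots> = 1 - a * cnj a" by (simp add: zcnj)
  finally show ?thesis .
qed

lemma cnj_rho: "cnj (rho a) = rho a" by (simp add: rho_def)
lemma rho_cnj: "rho (cnj a) = rho a" by (simp add: rho_def)

lemma Theta_unit:
  assumes "cmod a \<le> 1" "r < 2" "c < 2"
  shows "Theta a r 0 * cnj (Theta a c 0) + Theta a r 1 * cnj (Theta a c 1) = (if r = c then 1 else 0)"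
proof -
  have rs: "rho a * rho a = 1 - a * cnj a" using rho_sq[OF assms(1)] by (simp add: cnj_rho)
  have "r = 0 \<or> r = 1" "c = 0 \<or> c = 1" using assms by auto
  then show ?thesis using rs by (auto simp: Theta_def cnj_rho algebra_simps)
qed

lemma adj_Gm: "adj (Gm N a) = Gm N (cnj a)"
  by (intro ext) (auto simp: adj_def Gm_def Theta_def cnj_rho rho_cnj)

lemma Gm_right_inv:
  assumes N: "2 \<le> N" and a: "cmod a \<le> 1"
  shows "mm N (Gm N a) (adj (Gm N a)) = idm N"
proof (intro ext)
  fix i j
  show "mm N (Gm N a) (adj (Gm N a)) i j = idm N i j"
    unfolding mm_G[OF N]
  proof (cases "i < 2")
    case True
    show "(if i < 2 then Theta a i 0 * adj (Gm N a) 0 j + Theta a i 1 * adj (Gm N a) 1 j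
          else if i < N then adj (Gm N a) i j else 0) = idm N i j"
    proof (cases "j < 2")
      case True
      then show ?thesis using \<open>i < 2\<close> Theta_unit[OF a, of i j] N by (simp add: adj_def Gm_def idm_def)
    next
      case False
      then show ?thesis using \<open>i < 2\<close> by (auto simp: adj_def Gm_def idm_def)
    qed
  next
    case False
    then show "(if i < 2 then Theta a i 0 * adj (Gm N a) 0 j + Theta a i 1 * adj (Gm N a) 1 j
          else if i < N then adj (Gm N a) i j else 0) = idm N i j"
      by (auto simp: adj_def Gm_def idm_def)
  qed
qed

lemma Gm_unitary:
  assumes N: "2 \<le> N" and a: "cmod a \<le> 1"
  shows "unitary_n N (Gm N a)" "mm N (Gm N a) (adj (Gm N a)) = idm N" "mm N (adj (Gm N a)) (Gm N a) = idm N"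
proof -
  show 1: "mm N (Gm N a) (adj (Gm N a)) = idm N" by (rule Gm_right_inv[OF N a])
  have "mm N (Gm N (cnj a)) (adj (Gm N (cnj a))) = idm N" by (rule Gm_right_inv[OF N]) (use a in simp)
  then show 2: "mm N (adj (Gm N a)) (Gm N a) = idm N" by (simp add: adj_Gm)
  show "unitary_n N (Gm N a)" unfolding unitary_mm_iff using 1 2 by simp
qed

lemma bnd_Gm: "bnd N (Gm N a)" by (auto simp: bnd_def Gm_def)


definition posc :: "complex \<Rightarrow> bool" where "posc z \<longleftrightarrow> Im z = 0 \<and> Re z > 0"

definition cmvlike :: "nat \<Rightarrow> (nat \<Rightarrow> nat \<Rightarrow> complex) \<Rightarrow> bool" where
  "cmvlike n C \<longleftrightarrow> unitary_n n C \<and> bnd n C \<and>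
     (\<forall>i<n. \<forall>j<n. C i j \<noteq> 0 \<longrightarrow> j \<le> i + 2 \<and> (odd j \<longrightarrow> j \<le> i + 1)) \<and>
     (\<forall>i<n. \<forall>j<n. C i j \<noteq> 0 \<longrightarrow> i \<le> j + 2 \<and> (even i \<longrightarrow> i \<le> j + 1)) \<and>
     (\<forall>k. even k \<longrightarrow> k + 2 < n \<longrightarrow> posc (C k (k + 2))) \<and>
     (\<forall>k. odd k \<longrightarrow> k + 2 < n \<longrightarrow> posc (C (k + 2) k)) \<and>
     (2 \<le> n \<longrightarrow> posc (C 1 0))"

lemma posc_real: "posc z \<Longrightarrow> z = of_real (Re z) \<and> Re z > 0"
  unfolding posc_def by (simp add: complex_eq_iff)

lemma char_base:
  assumes "cmvlike 1 C"
  shows "\<exists>\<alpha> \<beta>. (\<forall>j<1 - 1. cmod (\<alpha> j) < 1) \<and> cmod \<beta> = 1 \<and> C = cmv 1 \<alpha> \<beta>"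
proof -
  have u: "C 0 0 * cnj (C 0 0) = 1" using assms unfolding cmvlike_def unitary_n_def by auto
  have b: "bnd 1 C" using assms unfolding cmvlike_def by auto
  have c1: "cmod (cnj (C 0 0)) = 1"
  proof -
    have "complex_of_real ((cmod (C 0 0))^2) = 1" using u by (simp add: zcnj)
    then have "(cmod (C 0 0))^2 = 1" using of_real_eq_1_iff by blast
    then show ?thesis using norm_ge_zero[of "C 0 0"] by (auto simp: power2_eq_1_iff)
  qed
  have "C i j = cmv 1 (\<lambda>_. 0) (cnj (C 0 0)) i j" for i j
  proof (cases "i = 0 \<and> j = 0")
    case True
    then show ?thesis by (simp add: cmv_def cmv_L_def cmv_M_def)
  next
    case False
    then have "C i j = 0" using b unfolding bnd_def by auto
    moreover have "cmv 1 (\<lambda>_. 0) (cnj (C 0 0)) i j = 0"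
      using False by (auto simp: cmv_def cmv_L_def cmv_M_def)
    ultimately show ?thesis by simp
  qed
  then have "C = cmv 1 (\<lambda>_. 0) (cnj (C 0 0))" by (intro ext)
  then show ?thesis using c1
    by (intro exI[of _ "\<lambda>_. 0"] exI[of _ "cnj (C 0 0)"]) simp
qed


lemma sum_sq_first_zero:
  assumes "(\<Sum>j<Suc m. f j * cnj (f j)) = 1" "f 0 = (1::complex)" "j < Suc m" "0 < j"
  shows "f j = 0"
proof -
  have "(\<Sum>j<Suc m. f j * cnj (f j)) = 1 + (\<Sum>j<m. f (Suc j) * cnj (f (Suc j)))"
    using assms(2) by (simp add: sum.lessThan_Suc_shift del: sum.lessThan_Suc)
  then have z: "(\<Sum>j<m. f (Suc j) * cnj (f (Suc j))) = 0" using assms(1) by simp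
  have e: "complex_of_real (\<Sum>j<m. (cmod (f (Suc j)))^2) = (\<Sum>j<m. f (Suc j) * cnj (f (Suc j)))"
    by (simp add: of_real_sum zcnj)
  have "complex_of_real (\<Sum>j<m. (cmod (f (Suc j)))^2) = 0" using e z by simp
  then have "(\<Sum>j<m. (cmod (f (Suc j)))^2) = 0" using of_real_eq_0_iff by blast
  then have "\<forall>j\<in>{..<m}. (cmod (f (Suc j)))^2 = 0" by (subst (asm) sum_nonneg_eq_0_iff) auto
  moreover obtain j' where "j = Suc j'" "j' < m" using assms(3,4) by (cases j) auto
  ultimately show ?thesis by simp
qed

lemma char_step:
  assumes m: "1 \<le> m" and cl: "cmvlike (Suc m) C"
    and IH: "\<And>C'. cmvlike m C' \<Longrightarrow> \<exists>\<alpha> \<beta>. (\<forall>j<m - 1. cmod (\<alpha> j) < 1) \<and> cmod \<beta> = 1 \<and> C' = cmv m \<alpha> \<beta>"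
  shows "\<exists>\<alpha> \<beta>. (\<forall>j<Suc m - 1. cmod (\<alpha> j) < 1) \<and> cmod \<beta> = 1 \<and> C = cmv (Suc m) \<alpha> \<beta>"
proof -
  define N where "N = Suc m"
  have N2: "2 \<le> N" using m by (simp add: N_def)
  obtain m' where m': "N = Suc (Suc m')" using N2 by (metis add_2_eq_Suc le_Suc_ex)
  have cl': "unitary_n N C \<and> bnd N C \<and>
     (\<forall>i<N. \<forall>j<N. C i j \<noteq> 0 \<longrightarrow> j \<le> i + 2 \<and> (odd j \<longrightarrow> j \<le> i + 1)) \<and>
     (\<forall>i<N. \<forall>j<N. C i j \<noteq> 0 \<longrightarrow> i \<le> j + 2 \<and> (even i \<longrightarrow> i \<le> j + 1)) \<and>
     (\<forall>k. even k \<longrightarrow> k + 2 < N \<longrightarrow> posc (C k (k + 2))) \<and>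
     (\<forall>k. odd k \<longrightarrow> k + 2 < N \<longrightarrow> posc (C (k + 2) k)) \<and>
     (2 \<le> N \<longrightarrow> posc (C 1 0))"
    using cl unfolding cmvlike_def N_def .
  have uC: "unitary_n N C" using cl' by (elim conjE) assumption
  have bC: "bnd N C" using cl' by (elim conjE) assumption
  have Z1: "\<forall>i<N. \<forall>j<N. C i j \<noteq> 0 \<longrightarrow> j \<le> i + 2 \<and> (odd j \<longrightarrow> j \<le> i + 1)" using cl' by (elim conjE) assumption
  have Z2: "\<forall>i<N. \<forall>j<N. C i j \<noteq> 0 \<longrightarrow> i \<le> j + 2 \<and> (even i \<longrightarrow> i \<le> j + 1)" using cl' by (elim conjE) assumption
  have Pe: "\<forall>k. even k \<longrightarrow> k + 2 < N \<longrightarrow> posc (C k (k + 2))" using cl' by (elim conjE) assumption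
  have Po: "\<forall>k. odd k \<longrightarrow> k + 2 < N \<longrightarrow> posc (C (k + 2) k)" using cl' by (elim conjE) assumption
  have P10': "2 \<le> N \<longrightarrow> posc (C 1 0)" using cl' by (elim conjE) assumption
  have P10: "posc (C 1 0)" using P10' N2 by blast
  have col0: "C k 0 = 0" if "2 \<le> k" for k
  proof (cases "k < N")
    case True
    show ?thesis
    proof (rule ccontr)
      assume "C k 0 \<noteq> 0"
      then have "k \<le> 0 + 2 \<and> (even k \<longrightarrow> k \<le> 0 + 1)" using Z2 True N2 by blast
      then show False using that by (cases "k = 2") auto
    qed
  next
    case False then show ?thesis using bC unfolding bnd_def by auto
  qed
  define c00 where "c00 = C 0 0"
  define r where "r = Re (C 1 0)"
  have c10: "C 1 0 = of_real r" "r > 0" using posc_real[OF P10] by (auto simp: r_def)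
  have nrm: "cnj c00 * c00 + of_real (r^2) = 1"
  proof -
    have "(\<Sum>k<N. cnj (C k 0) * C k 0) = 1" using uC N2 unfolding unitary_n_def by auto
    then show ?thesis unfolding m' sum_two_shift using col0 c10 by (simp add: c00_def power2_eq_square)
  qed
  define a where "a = cnj c00"
  have na: "(cmod a)^2 = 1 - r^2"
  proof -
    have "complex_of_real ((cmod a)^2) = complex_of_real (1 - r^2)" using nrm by (simp add: a_def zcnj mult.commute eq_diff_eq)
    then show ?thesis using of_real_eq_iff by blast
  qed
  have a1: "cmod a < 1"
  proof -
    have "(cmod a)^2 < 1" using na c10 by simp
    then show ?thesis by (simp add: power_less_one_iff abs_square_less_1)
  qed
  have rho_a: "rho a = of_real r"
    unfolding rho_def using na c10 by simp
  define G where "G = Gm N a"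
  define B where "B = mm N (adj G) C"
  have Gu: "unitary_n N G" "mm N G (adj G) = idm N" "mm N (adj G) G = idm N"
    using Gm_unitary[OF N2, of a] a1 by (auto simp: G_def)
  have bG: "bnd N G" by (simp add: G_def bnd_Gm)
  have Bform: "B i j = (if i = 0 then a * C 0 j + of_real r * C 1 j
       else if i = 1 then of_real r * C 0 j - cnj a * C 1 j else if i < N then C i j else 0)" for i j
    unfolding B_def G_def adj_Gm mm_G[OF N2] using rho_a by (auto simp: Theta_def rho_cnj)
  have bB: "bnd N B" unfolding B_def by (intro bnd_mm bnd_adj bG bC)
  have uB: "unitary_n N B"
  proof -
    have "unitary_n N (adj G)" using Gm_unitary[OF N2, of "cnj a"] a1 by (simp add: G_def adj_Gm)
    then show ?thesis unfolding B_def by (rule unitary_mult) (use bG bC uC in \<open>auto intro: bnd_adj\<close>)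
  qed
  have B00: "B 0 0 = 1"
  proof -
    have "B 0 0 = cnj c00 * c00 + of_real r * of_real r" using c10 by (simp add: Bform a_def c00_def)
    then show ?thesis using nrm by (simp add: power2_eq_square)
  qed
  have B10: "B 1 0 = 0" using c10 by (simp add: Bform a_def c00_def)
  have Bk0: "B k 0 = 0" if k0: "0 < k" for k
  proof -
    consider "k = 1" | "2 \<le> k" using k0 by arith
    then show ?thesis
    proof cases
      case 1 then show ?thesis using B10 by simp
    next
      case 2 then show ?thesis using col0[OF 2] by (simp add: Bform)
    qed
  qed
  have B0j: "B 0 j = 0" if "0 < j" for j
  proof (cases "j < N")
    case True
    have "(\<Sum>k<N. B 0 k * cnj (B 0 k)) = 1" using uB N2 unfolding unitary_n_def by auto
    then show ?thesis using sum_sq_first_zero[where m=m and f="B 0" and j=j] B00 True that by (simp add: N_def)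
  next
    case False then show ?thesis using bB unfolding bnd_def by auto
  qed
  define C' where "C' i j = (if i < m \<and> j < m then B (Suc j) (Suc i) else 0)" for i j
  have Bhi: "B i j = C i j" if "2 \<le> i" for i j
  proof (cases "i < N")
    case True then show ?thesis using that by (simp add: Bform)
  next
    case False then show ?thesis using bB bC unfolding bnd_def by auto
  qed
  have u1: "(\<Sum>k<m. C' i k * cnj (C' j k)) = (if i = j then 1 else 0)" if "i < m" "j < m" for i j
  proof -
    have "(\<Sum>k<N. cnj (B k (Suc j)) * B k (Suc i)) = (if Suc j = Suc i then 1 else 0)"
      using uB that unfolding unitary_n_def N_def by auto
    then have "(\<Sum>k<m. cnj (B (Suc k) (Suc j)) * B (Suc k) (Suc i)) = (if i = j then 1 else 0)"
      unfolding N_def using B0j by (auto simp: sum.lessThan_Suc_shift simp del: sum.lessThan_Suc)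
    then show ?thesis using that by (simp add: C'_def mult.commute)
  qed
  have u2: "(\<Sum>k<m. cnj (C' k i) * C' k j) = (if i = j then 1 else 0)" if "i < m" "j < m" for i j
  proof -
    have "(\<Sum>k<N. B (Suc j) k * cnj (B (Suc i) k)) = (if Suc j = Suc i then 1 else 0)"
      using uB that unfolding unitary_n_def N_def by auto
    then have "(\<Sum>k<m. B (Suc j) (Suc k) * cnj (B (Suc i) (Suc k))) = (if i = j then 1 else 0)"
      unfolding N_def using Bk0 by (auto simp: sum.lessThan_Suc_shift simp del: sum.lessThan_Suc)
    then show ?thesis using that by (simp add: C'_def mult.commute)
  qed
  have uC': "unitary_n m C'" unfolding unitary_n_def using u1 u2 by blast
  have bC': "bnd m C'" unfolding bnd_def C'_def by auto
  have Z1': "\<forall>i<m. \<forall>j<m. C' i j \<noteq> 0 \<longrightarrow> j \<le> i + 2 \<and> (odd j \<longrightarrow> j \<le> i + 1)"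
  proof (intro allI impI)
    fix i j assume a: "i < m" "j < m" "C' i j \<noteq> 0"
    show "j \<le> i + 2 \<and> (odd j \<longrightarrow> j \<le> i + 1)"
    proof (cases "j = 0")
      case False
      then have "C (Suc j) (Suc i) \<noteq> 0" using a Bhi[of "Suc j" "Suc i"] by (simp add: C'_def)
      then have "Suc j \<le> Suc i + 2 \<and> (even (Suc j) \<longrightarrow> Suc j \<le> Suc i + 1)"
        using Z2[rule_format, of "Suc j" "Suc i"] a unfolding N_def by simp
      then show ?thesis by simp
    qed simp
  qed
  have Z2': "\<forall>i<m. \<forall>j<m. C' i j \<noteq> 0 \<longrightarrow> i \<le> j + 2 \<and> (even i \<longrightarrow> i \<le> j + 1)"
  proof (intro allI impI)
    fix i j assume a: "i < m" "j < m" "C' i j \<noteq> 0"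
    show "i \<le> j + 2 \<and> (even i \<longrightarrow> i \<le> j + 1)"
    proof (cases "j = 0")
      case False
      then have "C (Suc j) (Suc i) \<noteq> 0" using a Bhi[of "Suc j" "Suc i"] by (simp add: C'_def)
      then have "Suc i \<le> Suc j + 2 \<and> (odd (Suc i) \<longrightarrow> Suc i \<le> Suc j + 1)"
        using Z1[rule_format, of "Suc j" "Suc i"] a unfolding N_def by simp
      then show ?thesis by simp
    next
      case True
      then have "B 1 (Suc i) \<noteq> 0" using a by (simp add: C'_def)
      then have "C 0 (Suc i) \<noteq> 0 \<or> C 1 (Suc i) \<noteq> 0" by (auto simp: Bform)
      then have "(Suc i \<le> 0 + 2 \<and> (odd (Suc i) \<longrightarrow> Suc i \<le> 0 + 1)) \<or> (Suc i \<le> 1 + 2 \<and> (odd (Suc i) \<longrightarrow> Suc i \<le> 1 + 1))"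
        using Z1[rule_format, of 0 "Suc i"] Z1[rule_format, of 1 "Suc i"] a N2 unfolding N_def by auto
      then show ?thesis using True by presburger
    qed
  qed
  have Pe': "\<forall>k. even k \<longrightarrow> k + 2 < m \<longrightarrow> posc (C' k (k + 2))"
  proof (intro allI impI)
    fix k assume a: "even k" "k + 2 < m"
    have "C' k (k + 2) = C ((k + 1) + 2) (k + 1)" using a Bhi[of "Suc (Suc (Suc k))" "Suc k"] by (simp add: C'_def)
    moreover have "posc (C ((k + 1) + 2) (k + 1))" using Po a unfolding N_def by simp
    ultimately show "posc (C' k (k + 2))" by simp
  qed
  have Po': "\<forall>k. odd k \<longrightarrow> k + 2 < m \<longrightarrow> posc (C' (k + 2) k)"
  proof (intro allI impI)
    fix k assume a: "odd k" "k + 2 < m"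
    then have k1: "2 \<le> k + 1" by presburger
    have "C' (k + 2) k = C (k + 1) ((k + 1) + 2)" using a Bhi[OF k1, of "Suc (Suc (Suc k))"] by (simp add: C'_def)
    moreover have "posc (C (k + 1) ((k + 1) + 2))" using Pe a unfolding N_def by simp
    ultimately show "posc (C' (k + 2) k)" by simp
  qed
  have P10': "posc (C' 1 0)" if m2: "2 \<le> m"
  proof -
    have "posc (C 0 2)" using Pe[rule_format, of 0] m2 unfolding N_def by (simp add: numeral_2_eq_2)
    then obtain s where s: "C 0 2 = of_real s" "s > 0" using posc_real by blast
    have b02: "a * C 0 2 + of_real r * C 1 2 = 0" using B0j[of 2] by (simp add: Bform)
    have "B 1 2 * of_real r = of_real r * of_real r * C 0 2 - cnj a * (of_real r * C 1 2)"
      by (simp add: Bform algebra_simps)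
    also have "of_real r * C 1 2 = - a * C 0 2" using b02 by (simp add: algebra_simps eq_neg_iff_add_eq_0)
    also have "of_real r * of_real r * C 0 2 - cnj a * (- a * C 0 2) = (of_real (r^2) + a * cnj a) * C 0 2"
      by (simp add: algebra_simps power2_eq_square)
    also have "of_real (r^2) + a * cnj a = 1"
    proof -
      have "a * cnj a = of_real ((cmod a)^2)" by (simp add: zcnj)
      then show ?thesis using na by simp
    qed
    finally have "B 1 2 * of_real r = of_real s" using s by simp
    then have "B 1 2 = of_real (s / r)" using c10 by (simp add: field_simps)
    moreover have "C' 1 0 = B 1 2" using m2 by (simp add: C'_def numeral_2_eq_2)
    ultimately show ?thesis using s c10 by (simp add: posc_def)
  qed
  have C'cl: "cmvlike m C'" unfolding cmvlike_def using uC' bC' Z1' Z2' Pe' Po' P10' by blast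
  obtain \<alpha>' \<beta> where v': "\<forall>j<m - 1. cmod (\<alpha>' j) < 1" "cmod \<beta> = 1" "C' = cmv m \<alpha>' \<beta>"
    using IH[OF C'cl] by blast
  define \<alpha> where "\<alpha> j = (if j = 0 then a else \<alpha>' (j - 1))" for j
  have va: "\<forall>j<Suc m - 1. cmod (\<alpha> j) < 1"
    using v'(1) a1 by (auto simp: \<alpha>_def)
  have sh: "(\<lambda>j. \<alpha> (Suc j)) = \<alpha>'" by (simp add: \<alpha>_def)
  have extB: "ext1 (\<lambda>i j. C' j i) = B"
  proof (intro ext)
    fix i j show "ext1 (\<lambda>i j. C' j i) i j = B i j"
    proof (cases "i = 0 \<or> j = 0")
      case True
      then show ?thesis using B00 Bk0 B0j by (auto simp: ext1_def)
    next
      case False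
      then show ?thesis using bB unfolding ext1_def C'_def bnd_def N_def by auto
    qed
  qed
  have "cmv (Suc m) \<alpha> \<beta> = mm N G B"
    unfolding cmv_factor[OF m] sh v'(3)[symmetric] extB by (simp add: G_def N_def \<alpha>_def)
  also have "\<dots> = C" unfolding B_def by (simp add: mm_assoc[symmetric] Gu mm_idl bC)
  finally show ?thesis using va v'(2) by (intro exI[of _ \<alpha>] exI[of _ \<beta>]) simp
qed


lemma char: "1 \<le> n \<Longrightarrow> cmvlike n C \<Longrightarrow> \<exists>\<alpha> \<beta>. (\<forall>j<n - 1. cmod (\<alpha> j) < 1) \<and> cmod \<beta> = 1 \<and> C = cmv n \<alpha> \<beta>"
proof (induction n arbitrary: C rule: nat_induct_at_least)
  case base
  then show ?case using char_base by simp
next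
  case (Suc m)
  show ?case by (rule char_step[OF Suc.hyps(1) Suc.prems]) (rule Suc.IH)
qed

lemma sum_sq_first_unit:
  assumes "(\<Sum>j<Suc m. f j * cnj (f j)) = 1" "f 0 * cnj (f 0) = (1::complex)" "j < Suc m" "0 < j"
  shows "f j = 0"
proof -
  have "(\<Sum>j<Suc m. f j * cnj (f j)) = 1 + (\<Sum>j<m. f (Suc j) * cnj (f (Suc j)))"
    using assms(2) by (simp add: sum.lessThan_Suc_shift del: sum.lessThan_Suc)
  then have z: "(\<Sum>j<m. f (Suc j) * cnj (f (Suc j))) = 0" using assms(1) by simp
  have e: "complex_of_real (\<Sum>j<m. (cmod (f (Suc j)))^2) = (\<Sum>j<m. f (Suc j) * cnj (f (Suc j)))"
    by (simp add: of_real_sum zcnj)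
  have "complex_of_real (\<Sum>j<m. (cmod (f (Suc j)))^2) = 0" using e z by simp
  then have "(\<Sum>j<m. (cmod (f (Suc j)))^2) = 0" using of_real_eq_0_iff by blast
  then have "\<forall>j\<in>{..<m}. (cmod (f (Suc j)))^2 = 0" by (subst (asm) sum_nonneg_eq_0_iff) auto
  moreover obtain j' where "j = Suc j'" "j' < m" using assms(3,4) by (cases j) auto
  ultimately show ?thesis by simp
qed

lemma c10_nz:
  assumes u: "unitary_n n C" and c0: "\<forall>k. 2 \<le> k \<longrightarrow> k < n \<longrightarrow> C k 0 = 0"
    and j: "1 \<le> j" "j < n" "C 0 j \<noteq> 0"
  shows "C 1 0 \<noteq> 0"
proof
  assume c: "C 1 0 = 0"
  have n2: "2 \<le> n" using j by simp
  obtain m where m: "n = Suc (Suc m)" using n2 by (metis add_2_eq_Suc le_Suc_ex)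
  have "(\<Sum>k<n. cnj (C k 0) * C k 0) = 1" using u m unfolding unitary_n_def by auto
  moreover have "(\<Sum>k<m. cnj (C (Suc (Suc k)) 0) * C (Suc (Suc k)) 0) = 0"
    by (intro sum.neutral) (use c0 m in auto)
  ultimately have c00: "C 0 0 * cnj (C 0 0) = 1" unfolding m sum_two_shift using c by (simp add: mult.commute)
  have "(\<Sum>k<n. C 0 k * cnj (C 0 k)) = 1" using u m unfolding unitary_n_def by auto
  then have "C 0 j = 0" using sum_sq_first_unit[where f="C 0" and m="Suc m" and j=j] c00 j m by simp
  then show False using j by simp
qed


context cons begin

lemma o0: "orth_from 0" using good[of 0] by simp
lemma G20: "G2from 0" using good[of 0] by simp

lemma ofr: "orth_from k" using orth_from_mono[OF o0] by simp

lemma G2_use: "Suc m < n \<Longrightarrow> inF (Suc m) y \<Longrightarrow> inF m (dg (eta m) y)"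
  using G20 unfolding G2from_def by auto

lemma dgx_odd: "odd j \<Longrightarrow> j < n \<Longrightarrow> inF (j - 1) (dg \<xi> (chi j))"
proof -
  assume a: "odd j" "j < n"
  define m where "m = j - 1"
  have m: "j = Suc m" "even m" using a unfolding m_def by presburger+
  have "inF (Suc m) (chi j)" using inF_chi[OF ofr] a m by simp
  then have "inF m (dg (eta m) (chi j))" using G2_use a m by simp
  then show ?thesis using m by (simp add: eta_def)
qed

lemma dgx_even: "even j \<Longrightarrow> 2 \<le> j \<Longrightarrow> j < n \<Longrightarrow> inF (j - 2) (dg \<xi> (chi j))"
proof -
  assume a: "even j" "2 \<le> j" "j < n"
  define m where "m = j - 2"
  have m: "j = Suc (Suc m)" "even m" using a unfolding m_def by presburger+
  have "inF (Suc m) (chi j)" using inF_chi[OF ofr] a m by simp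
  then have "inF m (dg (eta m) (chi j))" using G2_use a m by simp
  then show ?thesis using m by (simp add: eta_def)
qed

lemma dgc_even: "even j \<Longrightarrow> 1 \<le> j \<Longrightarrow> j < n \<Longrightarrow> inF (j - 1) (dg (\<lambda>t. cnj (\<xi> t)) (chi j))"
proof -
  assume a: "even j" "1 \<le> j" "j < n"
  define m where "m = j - 1"
  have m: "j = Suc m" "odd m" using a unfolding m_def by presburger+
  have "inF (Suc m) (chi j)" using inF_chi[OF ofr] a m by simp
  then have "inF m (dg (eta m) (chi j))" using G2_use a m by simp
  then show ?thesis using m by (simp add: eta_def)
qed

lemma dgc_odd: "odd j \<Longrightarrow> 3 \<le> j \<Longrightarrow> j < n \<Longrightarrow> inF (j - 2) (dg (\<lambda>t. cnj (\<xi> t)) (chi j))"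
proof -
  assume a: "odd j" "3 \<le> j" "j < n"
  define m where "m = j - 2"
  have m: "j = Suc (Suc m)" and m2: "odd m" using a unfolding m_def by presburger+
  have "inF (Suc m) (chi j)" using inF_chi[OF ofr] a m by simp
  then have "inF m (dg (eta m) (chi j))" using G2_use a m by simp
  then show ?thesis using m m2 by (simp add: eta_def)
qed

lemma orth_low: "inF m y \<Longrightarrow> i < m \<Longrightarrow> i < n \<Longrightarrow> inner_n n y (chi i) = 0"
  by (rule inF_orth) (use o0 in \<open>auto simp: orth_from_def\<close>)

abbreviation C0 where "C0 \<equiv> matb n \<xi> chi"

lemma C0_Z1: "i < n \<Longrightarrow> j < n \<Longrightarrow> C0 i j \<noteq> 0 \<Longrightarrow> j \<le> i + 2 \<and> (odd j \<longrightarrow> j \<le> i + 1)"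
proof (rule ccontr)
  assume a: "i < n" "j < n" "C0 i j \<noteq> 0" "\<not> (j \<le> i + 2 \<and> (odd j \<longrightarrow> j \<le> i + 1))"
  show False
  proof (cases "even j")
    case False
    then have "inner_n n (dg \<xi> (chi j)) (chi i) = 0" using a orth_low[OF dgx_odd[OF False a(2)], of i] by auto
    then show False using a by (simp add: matb_def)
  next
    case True
    then have "inner_n n (dg \<xi> (chi j)) (chi i) = 0" using a orth_low[OF dgx_even[OF True _ a(2)], of i] by auto
    then show False using a by (simp add: matb_def)
  qed
qed

lemma C0_cnj: "i < n \<Longrightarrow> j < n \<Longrightarrow> C0 i j = cnj (inner_n n (dg (\<lambda>t. cnj (\<xi> t)) (chi i)) (chi j))"
  by (simp add: matb_def inner_dg_move inner_cnj[of n "chi j"])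

lemma C0_Z2: "i < n \<Longrightarrow> j < n \<Longrightarrow> C0 i j \<noteq> 0 \<Longrightarrow> i \<le> j + 2 \<and> (even i \<longrightarrow> i \<le> j + 1)"
proof (rule ccontr)
  assume a: "i < n" "j < n" "C0 i j \<noteq> 0" "\<not> (i \<le> j + 2 \<and> (even i \<longrightarrow> i \<le> j + 1))"
  show False
  proof (cases "even i")
    case True
    then have "inner_n n (dg (\<lambda>t. cnj (\<xi> t)) (chi i)) (chi j) = 0" using a orth_low[OF dgc_even[OF True _ a(1)], of j] by auto
    then show False using a C0_cnj by simp
  next
    case False
    then have "inner_n n (dg (\<lambda>t. cnj (\<xi> t)) (chi i)) (chi j) = 0" using a orth_low[OF dgc_odd[OF False _ a(1)], of j] by auto
    then show False using a C0_cnj by simp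
  qed
qed

lemma C0_pe: "even k \<Longrightarrow> k + 2 < n \<Longrightarrow> C0 k (k + 2) = of_real (rr k)"
proof -
  assume a: "even k" "k + 2 < n"
  have "sidx k = k + 2" using a unfolding sidx_def by auto
  then have "uu k = dg \<xi> (chi (k + 2))" using a by (simp add: uu_def eta_def)
  then show ?thesis using uu_chi[of k] a by (simp add: matb_def)
qed

lemma C0_po: "odd k \<Longrightarrow> k + 2 < n \<Longrightarrow> C0 (k + 2) k = of_real (rr k)"
proof -
  assume a: "odd k" "k + 2 < n"
  have "sidx k = k + 2" using a unfolding sidx_def by auto
  then have "uu k = dg (\<lambda>t. cnj (\<xi> t)) (chi (k + 2))" using a by (simp add: uu_def eta_def)
  then show ?thesis using uu_chi[of k] a C0_cnj[of "k + 2" k] by simp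
qed

lemma C0_first: "2 \<le> n \<Longrightarrow> C0 0 (sidx 0) = of_real (rr 0) \<and> 1 \<le> sidx 0 \<and> sidx 0 < n"
proof -
  assume a: "2 \<le> n"
  have "uu 0 = dg \<xi> (chi (sidx 0))" by (simp add: uu_def eta_def)
  moreover have "1 \<le> sidx 0 \<and> sidx 0 < n" using a by (auto simp: sidx_def)
  ultimately show ?thesis using uu_chi[of 0] a by (simp add: matb_def)
qed

end

context cons begin

lemma exist: "\<exists>C. cmvlike n C \<and> spectral_measure n C (e_last n) (\<lambda>z. \<Sum>l\<in>{l. l < n \<and> \<xi> l = z}. (cmod (v l))^2)"
proof -
  have uC0: "unitary_n n C0" by (rule matb_unitary[OF orth_all xi1])
  define c where "c = C0 1 0"
  have cnz: "c \<noteq> 0" if n2: "2 \<le> n"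
  proof -
    have "C0 1 0 \<noteq> 0"
    proof (rule c10_nz[OF uC0])
      show "\<forall>k. 2 \<le> k \<longrightarrow> k < n \<longrightarrow> C0 k 0 = 0"
      proof (intro allI impI)
        fix k assume "2 \<le> k" "k < n"
        then show "C0 k 0 = 0" using C0_Z2[of k 0] n2 by (cases "C0 k 0 = 0"; cases "k = 2") auto
      qed
      show "1 \<le> sidx 0" "sidx 0 < n" "C0 0 (sidx 0) \<noteq> 0"
        using C0_first[OF n2] rr_pos[of 0] n2 by auto
    qed
    then show ?thesis by (simp add: c_def)
  qed
  define p where "p = (if 2 \<le> n then cnj c / of_real (cmod c) else 1)"
  have p1: "p * cnj p = 1"
  proof (cases "2 \<le> n")
    case True
    then have "cmod c \<noteq> 0" using cnz by simp
    moreover have "cnj c * c = (of_real (cmod c))^2" by (simp add: zcnj mult.commute)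
    ultimately show ?thesis using True by (simp add: p_def field_simps power2_eq_square)
  qed (simp add: p_def)
  define d where "d i = (if even i then 1 else p)" for i :: nat
  have d1: "d i * cnj (d i) = 1" for i using p1 by (simp add: d_def)
  have dm: "cmod (d i) = 1" for i
  proof -
    have "complex_of_real ((cmod (d i))^2) = 1" using d1[of i] by (simp add: zcnj)
    then have "(cmod (d i))^2 = 1" using of_real_eq_1_iff by blast
    then show ?thesis using norm_ge_zero[of "d i"] by (auto simp: power2_eq_1_iff)
  qed
  define q where "q i = (\<lambda>t. cnj (d i) * chi i t)" for i
  have oq: "orthon n q"
    unfolding orthon_def
  proof (intro allI impI)
    fix i j assume "i < n" "j < n"
    then have "inner_n n (chi i) (chi j) = (if i = j then 1 else 0)" using orth_all unfolding orthon_def by auto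
    then show "inner_n n (q i) (q j) = (if i = j then 1 else 0)"
      unfolding q_def inner_scale_left inner_scale_right using d1[of i] by (auto simp: mult.commute)
  qed
  define C where "C = matb n \<xi> q"
  have Cq: "C i j = d i * C0 i j * cnj (d j)" for i j
  proof -
    have "dg \<xi> (q j) = (\<lambda>t. cnj (d j) * dg \<xi> (chi j) t)" by (simp add: q_def dg_def mult_ac)
    then show ?thesis unfolding C_def matb_def q_def
      by (simp add: inner_scale_left inner_scale_right mult_ac)
  qed
  have nz: "C i j \<noteq> 0 \<Longrightarrow> C0 i j \<noteq> 0" for i j by (simp add: Cq)
  have par: "d k * cnj (d (k + 2)) = 1" for k using d1[of k] by (simp add: d_def)
  have c1: "unitary_n n C" unfolding C_def by (rule matb_unitary[OF oq xi1])
  have c2: "bnd n C" unfolding C_def bnd_def matb_def by auto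
  have c3: "\<forall>i<n. \<forall>j<n. C i j \<noteq> 0 \<longrightarrow> j \<le> i + 2 \<and> (odd j \<longrightarrow> j \<le> i + 1)"
    using C0_Z1 nz by blast
  have c4: "\<forall>i<n. \<forall>j<n. C i j \<noteq> 0 \<longrightarrow> i \<le> j + 2 \<and> (even i \<longrightarrow> i \<le> j + 1)"
    using C0_Z2 nz by blast
  have c5: "\<forall>k. even k \<longrightarrow> k + 2 < n \<longrightarrow> posc (C k (k + 2))"
  proof (intro allI impI)
    fix k assume a: "even k" "k + 2 < n"
    have "C k (k + 2) = of_real (rr k)" using C0_pe[OF a] par[of k] by (simp add: Cq mult_ac)
    then show "posc (C k (k + 2))" using rr_pos[of k] a by (simp add: posc_def)
  qed
  have c6: "\<forall>k. odd k \<longrightarrow> k + 2 < n \<longrightarrow> posc (C (k + 2) k)"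
  proof (intro allI impI)
    fix k assume a: "odd k" "k + 2 < n"
    have "C (k + 2) k = of_real (rr k)" using C0_po[OF a] par[of k] d1[of k]
      by (simp add: Cq d_def mult_ac)
    then show "posc (C (k + 2) k)" using rr_pos[of k] a by (simp add: posc_def)
  qed
  have c7: "2 \<le> n \<longrightarrow> posc (C 1 0)"
  proof
    assume n2: "2 \<le> n"
    have "C 1 0 = p * c" by (simp add: Cq d_def c_def)
    also have "\<dots> = of_real (cmod c)"
    proof -
      have "cmod c \<noteq> 0" using cnz[OF n2] by simp
      moreover have "cnj c * c = (of_real (cmod c))^2" by (simp add: zcnj mult.commute)
      ultimately show ?thesis using n2 by (simp add: p_def field_simps power2_eq_square)
    qed
    finally show "posc (C 1 0)" using cnz[OF n2] by (simp add: posc_def)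
  qed
  have cl: "cmvlike n C" unfolding cmvlike_def using c1 c2 c3 c4 c5 c6 c7 by blast
  have sp: "spectral_measure n C (e_last n) (\<lambda>z. \<Sum>l\<in>{l. l < n \<and> \<xi> l = z}. (cmod (q (n - 1) l))^2)"
    unfolding C_def by (rule matb_spectral[OF oq n1])
  have "(\<lambda>z. \<Sum>l\<in>{l. l < n \<and> \<xi> l = z}. (cmod (q (n - 1) l))^2) = (\<lambda>z. \<Sum>l\<in>{l. l < n \<and> \<xi> l = z}. (cmod (v l))^2)"
    using chi_top[of "n - 1"] n1 by (simp add: q_def norm_mult dm)
  then show ?thesis using cl sp by auto
qed

end

lemma existence:
  fixes n :: nat and \<xi> :: "nat \<Rightarrow> complex" and \<nu> :: "nat \<Rightarrow> real"
  assumes "n \<ge> 1"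
    and "\<forall>j<n. cmod (\<xi> j) = 1"
    and "inj_on \<xi> {..<n}"
    and "\<forall>j<n. \<nu> j > 0"
    and "(\<Sum>j<n. \<nu> j) = 1"
  shows "\<exists>C. (\<exists>\<alpha> \<beta>. (\<forall>j<n - 1. cmod (\<alpha> j) < 1) \<and> cmod \<beta> = 1 \<and> C = cmv n \<alpha> \<beta>)
             \<and> spectral_measure n C (e_last n) (\<lambda>z. \<Sum>j\<in>{j. j < n \<and> \<xi> j = z}. \<nu> j)"
proof -
  define v where "v k = complex_of_real (sqrt (\<nu> k))" for k
  have sq: "(cmod (v k))^2 = \<nu> k" if "k < n" for k
  proof -
    have "0 \<le> \<nu> k" using assms(4) that by (simp add: order.strict_implies_order)
    then show ?thesis by (simp add: v_def)
  qed
  interpret cons n \<xi> v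
  proof
    show "1 \<le> n" "\<forall>k<n. cmod (\<xi> k) = 1" "inj_on \<xi> {..<n}" using assms by auto
    show "\<forall>k<n. v k \<noteq> 0" using assms(4) by (simp add: v_def less_imp_neq[symmetric] order.strict_implies_not_eq)
    show "nsq n v = 1" unfolding nsq_def using sq assms(5) by simp
  qed
  obtain C where C: "cmvlike n C" "spectral_measure n C (e_last n) (\<lambda>z. \<Sum>l\<in>{l. l < n \<and> \<xi> l = z}. (cmod (v l))^2)"
    using exist by blast
  have "(\<lambda>z. \<Sum>l\<in>{l. l < n \<and> \<xi> l = z}. (cmod (v l))^2) = (\<lambda>z. \<Sum>j\<in>{j. j < n \<and> \<xi> j = z}. \<nu> j)"
    using sq by (intro ext sum.cong) auto
  then show ?thesis using C char[OF assms(1) C(1)] by auto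
qed


lemma L_nz: "cmv_L n \<alpha> \<beta> i l \<noteq> 0 \<Longrightarrow> i div 2 = l div 2 \<and> i < n \<and> l < n"
  unfolding cmv_L_def by (auto split: if_splits)

lemma M_nz: "cmv_M n \<alpha> \<beta> l j \<noteq> 0 \<Longrightarrow> ((l = 0 \<and> j = 0) \<or> (1 \<le> l \<and> 1 \<le> j \<and> (l - 1) div 2 = (j - 1) div 2)) \<and> l < n \<and> j < n"
  unfolding cmv_M_def by (auto split: if_splits)

lemma cmv_nz: "cmv n \<alpha> \<beta> i j \<noteq> 0 \<Longrightarrow> \<exists>l<n. cmv_L n \<alpha> \<beta> i l \<noteq> 0 \<and> cmv_M n \<alpha> \<beta> l j \<noteq> 0"
  unfolding cmv_def by (metis (no_types, lifting) lessThan_iff mult_eq_0_iff sum.neutral)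

lemma div2_le: "(a::nat) div 2 = b div 2 \<Longrightarrow> a \<le> 2 * (b div 2) + 1"
proof -
  assume h: "a div 2 = b div 2"
  have "a = 2 * (a div 2) + a mod 2" by simp
  moreover have "a mod 2 \<le> 1" by simp
  ultimately show ?thesis using h by linarith
qed

lemma div2_ge: "(a::nat) div 2 = b div 2 \<Longrightarrow> 2 * (b div 2) \<le> a"
proof -
  assume h: "a div 2 = b div 2"
  have "a = 2 * (a div 2) + a mod 2" by simp
  then show ?thesis using h by linarith
qed

lemma two_div2_le: "2 * ((b::nat) div 2) \<le> b" by simp
lemma two_div2_ge: "(b::nat) \<le> 2 * (b div 2) + 1"
proof -
  have "b = 2 * (b div 2) + b mod 2" by simp
  moreover have "b mod 2 \<le> 1" by simp
  ultimately show ?thesis by linarith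
qed
lemma two_div2_even: "even (b::nat) \<Longrightarrow> 2 * (b div 2) = b" by simp
lemma two_div2_odd: "odd (b::nat) \<Longrightarrow> 2 * (b div 2) + 1 = b" by presburger

lemma cmv_Z1: "cmv n \<alpha> \<beta> i j \<noteq> 0 \<Longrightarrow> j \<le> i + 2 \<and> (odd j \<longrightarrow> j \<le> i + 1)"
proof -
  assume "cmv n \<alpha> \<beta> i j \<noteq> 0"
  then obtain l where "cmv_L n \<alpha> \<beta> i l \<noteq> 0" "cmv_M n \<alpha> \<beta> l j \<noteq> 0" using cmv_nz by blast
  then have A: "i div 2 = l div 2" and B: "(l = 0 \<and> j = 0) \<or> (1 \<le> l \<and> 1 \<le> j \<and> (l - 1) div 2 = (j - 1) div 2)"
    using L_nz M_nz by blast+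
  have l1: "l \<le> 2 * (i div 2) + 1" using div2_le[OF A[symmetric]] .
  have l2: "2 * (i div 2) \<le> i" by simp
  show ?thesis
  proof (cases "l = 0 \<and> j = 0")
    case True then show ?thesis by simp
  next
    case False
    then have B': "1 \<le> l" "1 \<le> j" "(l - 1) div 2 = (j - 1) div 2" using B by auto
    have "j - 1 \<le> 2 * ((l - 1) div 2) + 1" using div2_le[OF B'(3)[symmetric]] .
    moreover have "2 * ((l - 1) div 2) \<le> l - 1" by simp
    moreover have "odd j \<Longrightarrow> j - 1 = 2 * ((l - 1) div 2)"
    proof -
      assume "odd j"
      then have "even (j - 1)" using B'(2) by simp
      then have "j - 1 = 2 * ((j - 1) div 2)" by simp
      then show ?thesis using B'(3) by simp
    qed
    moreover have "2 * (i div 2) + 1 \<le> i + 1" using l2 by simp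
    ultimately show ?thesis using l1 B' by linarith
  qed
qed

lemma cmv_Z2: "cmv n \<alpha> \<beta> i j \<noteq> 0 \<Longrightarrow> i \<le> j + 2 \<and> (even i \<longrightarrow> i \<le> j + 1)"
proof -
  assume "cmv n \<alpha> \<beta> i j \<noteq> 0"
  then obtain l where "cmv_L n \<alpha> \<beta> i l \<noteq> 0" "cmv_M n \<alpha> \<beta> l j \<noteq> 0" using cmv_nz by blast
  then have A: "i div 2 = l div 2" and B: "(l = 0 \<and> j = 0) \<or> (1 \<le> l \<and> 1 \<le> j \<and> (l - 1) div 2 = (j - 1) div 2)"
    using L_nz M_nz by blast+
  have i1: "i \<le> 2 * (l div 2) + 1" using div2_le[OF A] .
  have i2: "2 * (l div 2) \<le> l" by simp
  have ie: "even i \<Longrightarrow> i \<le> l"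
  proof -
    assume "even i"
    then have "i = 2 * (i div 2)" by simp
    then show ?thesis using A i2 by simp
  qed
  show ?thesis
  proof (cases "l = 0 \<and> j = 0")
    case True then show ?thesis using i1 i2 ie by auto
  next
    case False
    then have B': "1 \<le> l" "1 \<le> j" "(l - 1) div 2 = (j - 1) div 2" using B by auto
    have "l - 1 \<le> 2 * ((j - 1) div 2) + 1" using div2_le[OF B'(3)] .
    moreover have "2 * ((j - 1) div 2) \<le> j - 1" by simp
    ultimately show ?thesis using i1 i2 ie B' by linarith
  qed
qed

lemma cmv_single:
  assumes "l0 < n" "\<And>l. l < n \<Longrightarrow> l \<noteq> l0 \<Longrightarrow> cmv_L n \<alpha> \<beta> i l = 0 \<or> cmv_M n \<alpha> \<beta> l j = 0"
  shows "cmv n \<alpha> \<beta> i j = cmv_L n \<alpha> \<beta> i l0 * cmv_M n \<alpha> \<beta> l0 j"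
proof -
  have "cmv n \<alpha> \<beta> i j = (\<Sum>l<n. if l = l0 then cmv_L n \<alpha> \<beta> i l * cmv_M n \<alpha> \<beta> l j else 0)"
    unfolding cmv_def using assms(2) by (intro sum.cong refl) auto
  then show ?thesis using assms(1) by simp
qed

lemma rho_pos: "cmod a < 1 \<Longrightarrow> rho a = of_real (sqrt (1 - (cmod a)^2)) \<and> sqrt (1 - (cmod a)^2) > 0"
proof -
  assume "cmod a < 1"
  then have "(cmod a)^2 < 1" by (simp add: power_less_one_iff abs_square_less_1)
  then show ?thesis by (simp add: rho_def)
qed

lemma cmv_E1:
  assumes "even k" "k + 2 < n"
  shows "cmv n \<alpha> \<beta> k (k + 2) = rho (\<alpha> k) * rho (\<alpha> (k + 1))"
proof -
  have "cmv n \<alpha> \<beta> k (k + 2) = cmv_L n \<alpha> \<beta> k (k + 1) * cmv_M n \<alpha> \<beta> (k + 1) (k + 2)"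
  proof (rule cmv_single)
    show "k + 1 < n" using assms by simp
    fix l assume "l < n" "l \<noteq> k + 1"
    show "cmv_L n \<alpha> \<beta> k l = 0 \<or> cmv_M n \<alpha> \<beta> l (k + 2) = 0"
    proof (rule ccontr)
      assume "\<not> (cmv_L n \<alpha> \<beta> k l = 0 \<or> cmv_M n \<alpha> \<beta> l (k + 2) = 0)"
      then have A: "k div 2 = l div 2" and B: "(l = 0 \<and> k + 2 = 0) \<or> (1 \<le> l \<and> 1 \<le> k + 2 \<and> (l - 1) div 2 = (k + 2 - 1) div 2)"
        using L_nz M_nz by blast+
      have kk: "2 * (k div 2) = k" using assms(1) by simp
      have "l \<le> k + 1" using div2_le[OF A[symmetric]] kk by simp
      moreover have "k \<le> l" using div2_ge[OF A[symmetric]] kk by simp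
      ultimately have lk: "l = k" using \<open>l \<noteq> k + 1\<close> by simp
      show False
      proof (cases "l = 0 \<and> k + 2 = 0")
        case False
        then have B': "1 \<le> l" "(l - 1) div 2 = (k + 1) div 2" using B by auto
        then have "1 \<le> k" using lk by simp
        then have "odd (k - 1)" using assms(1) by simp
        then have "2 * ((k - 1) div 2) + 1 = k - 1" by (rule two_div2_odd)
        moreover have "k + 1 \<le> 2 * ((k + 1) div 2) + 1" by (rule two_div2_ge)
        moreover have "2 * ((k + 1) div 2) \<le> k + 1" by simp
        moreover have "(k + 1) div 2 = (k - 1) div 2" using B'(2) lk by simp
        moreover have "k - 1 + 1 = k" using \<open>1 \<le> k\<close> by simp
        ultimately show False by linarith
      qed simp
    qed
  qed
  moreover have "cmv_L n \<alpha> \<beta> k (k + 1) = rho (\<alpha> k)"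
    using assms by (auto simp: cmv_L_def Theta_def)
  moreover have "cmv_M n \<alpha> \<beta> (k + 1) (k + 2) = rho (\<alpha> (k + 1))"
    using assms by (auto simp: cmv_M_def Theta_def)
  ultimately show ?thesis by simp
qed

lemma cmv_E2:
  assumes "odd k" "k + 2 < n"
  shows "cmv n \<alpha> \<beta> (k + 2) k = rho (\<alpha> (k + 1)) * rho (\<alpha> k)"
proof -
  have "cmv n \<alpha> \<beta> (k + 2) k = cmv_L n \<alpha> \<beta> (k + 2) (k + 1) * cmv_M n \<alpha> \<beta> (k + 1) k"
  proof (rule cmv_single)
    show "k + 1 < n" using assms by simp
    fix l assume "l < n" "l \<noteq> k + 1"
    show "cmv_L n \<alpha> \<beta> (k + 2) l = 0 \<or> cmv_M n \<alpha> \<beta> l k = 0"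
    proof (rule ccontr)
      assume "\<not> (cmv_L n \<alpha> \<beta> (k + 2) l = 0 \<or> cmv_M n \<alpha> \<beta> l k = 0)"
      then have A: "(k + 2) div 2 = l div 2" and B: "(l = 0 \<and> k = 0) \<or> (1 \<le> l \<and> 1 \<le> k \<and> (l - 1) div 2 = (k - 1) div 2)"
        using L_nz M_nz by blast+
      have o2: "2 * ((k + 2) div 2) + 1 = k + 2" using assms(1) by (intro two_div2_odd) simp
      have "l \<le> 2 * (l div 2) + 1" by (rule two_div2_ge)
      moreover have "2 * (l div 2) \<le> l" by simp
      ultimately have "l \<le> k + 2" "k + 1 \<le> l" using A o2 by linarith+
      then have lk: "l = k + 2" using \<open>l \<noteq> k + 1\<close> by simp
      show False
      proof (cases "l = 0 \<and> k = 0")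
        case False
        then have B': "(l - 1) div 2 = (k - 1) div 2" "1 \<le> k" using B by auto
        have e1: "2 * ((k + 1) div 2) = k + 1" using assms(1) by (intro two_div2_even) simp
        have e2: "2 * ((k - 1) div 2) = k - 1" using assms(1) B'(2) by (intro two_div2_even) simp
        have "(k + 1) div 2 = (k - 1) div 2" using B'(1) lk by simp
        then have "k + 1 = k - 1" using e1 e2 by simp
        then show False by simp
      qed (use lk in simp)
    qed
  qed
  moreover have "cmv_L n \<alpha> \<beta> (k + 2) (k + 1) = rho (\<alpha> (k + 1))"
  proof -
    have "(k + 2) div 2 = (k + 1) div 2" "2 * ((k + 2) div 2) = k + 1" "(k + 2) mod 2 = 1" "(k + 1) mod 2 = 0"
      using assms by presburger+
    then show ?thesis using assms by (auto simp: cmv_L_def Theta_def)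
  qed
  moreover have "cmv_M n \<alpha> \<beta> (k + 1) k = rho (\<alpha> k)"
  proof -
    have "k div 2 = (k - 1) div 2" "2 * (k div 2) + 1 = k" "k mod 2 = 1" "(k - 1) mod 2 = 0" "1 \<le> k"
      using assms by presburger+
    then show ?thesis using assms by (auto simp: cmv_M_def Theta_def)
  qed
  ultimately show ?thesis by simp
qed

lemma cmv_E3:
  assumes "2 \<le> n"
  shows "cmv n \<alpha> \<beta> 1 0 = rho (\<alpha> 0)"
proof -
  have "cmv n \<alpha> \<beta> 1 0 = cmv_L n \<alpha> \<beta> 1 0 * cmv_M n \<alpha> \<beta> 0 0"
  proof (rule cmv_single)
    show "0 < n" using assms by simp
    fix l assume "l < n" "l \<noteq> 0"
    then show "cmv_L n \<alpha> \<beta> 1 l = 0 \<or> cmv_M n \<alpha> \<beta> l 0 = 0"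
      using M_nz[of n \<alpha> \<beta> l 0] by auto
  qed
  then show ?thesis using assms by (simp add: cmv_L_def cmv_M_def Theta_def)
qed

lemma cmv_E4:
  assumes "even n" "2 \<le> n"
  shows "cmv n \<alpha> \<beta> (n - 2) (n - 1) = rho (\<alpha> (n - 2)) * cnj \<beta>"
proof -
  have "cmv n \<alpha> \<beta> (n - 2) (n - 1) = cmv_L n \<alpha> \<beta> (n - 2) (n - 1) * cmv_M n \<alpha> \<beta> (n - 1) (n - 1)"
  proof (rule cmv_single)
    show "n - 1 < n" using assms by simp
    fix l assume "l < n" "l \<noteq> n - 1"
    show "cmv_L n \<alpha> \<beta> (n - 2) l = 0 \<or> cmv_M n \<alpha> \<beta> l (n - 1) = 0"
    proof (rule ccontr)
      assume "\<not> (cmv_L n \<alpha> \<beta> (n - 2) l = 0 \<or> cmv_M n \<alpha> \<beta> l (n - 1) = 0)"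
      then have B: "(l = 0 \<and> n - 1 = 0) \<or> (1 \<le> l \<and> 1 \<le> n - 1 \<and> (l - 1) div 2 = (n - 1 - 1) div 2)"
        using M_nz by blast
      show False using B assms \<open>l \<noteq> n - 1\<close> \<open>l < n\<close> by presburger
    qed
  qed
  moreover have "cmv_L n \<alpha> \<beta> (n - 2) (n - 1) = rho (\<alpha> (n - 2))"
  proof -
    have "(n - 2) div 2 = (n - 1) div 2" "2 * ((n - 2) div 2) = n - 2" "(n - 2) mod 2 = 0" "(n - 1) mod 2 = 1"
      using assms by presburger+
    then show ?thesis using assms by (auto simp: cmv_L_def Theta_def)
  qed
  moreover have "cmv_M n \<alpha> \<beta> (n - 1) (n - 1) = cnj \<beta>"
  proof -
    have "\<not> 2 * ((n - 1 - 1) div 2) + 2 < n" using assms by presburger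
    then show ?thesis using assms by (auto simp: cmv_M_def)
  qed
  ultimately show ?thesis by simp
qed

lemma cmv_E5:
  assumes "odd n" "3 \<le> n"
  shows "cmv n \<alpha> \<beta> (n - 1) (n - 2) = cnj \<beta> * rho (\<alpha> (n - 2))"
proof -
  have "cmv n \<alpha> \<beta> (n - 1) (n - 2) = cmv_L n \<alpha> \<beta> (n - 1) (n - 1) * cmv_M n \<alpha> \<beta> (n - 1) (n - 2)"
  proof (rule cmv_single)
    show "n - 1 < n" using assms by simp
    fix l assume "l < n" "l \<noteq> n - 1"
    show "cmv_L n \<alpha> \<beta> (n - 1) l = 0 \<or> cmv_M n \<alpha> \<beta> l (n - 2) = 0"
    proof (rule ccontr)
      assume "\<not> (cmv_L n \<alpha> \<beta> (n - 1) l = 0 \<or> cmv_M n \<alpha> \<beta> l (n - 2) = 0)"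
      then have A: "(n - 1) div 2 = l div 2" using L_nz by blast
      show False using A assms \<open>l \<noteq> n - 1\<close> \<open>l < n\<close> by presburger
    qed
  qed
  moreover have "cmv_L n \<alpha> \<beta> (n - 1) (n - 1) = cnj \<beta>"
  proof -
    have "\<not> 2 * ((n - 1) div 2) + 1 < n" using assms by presburger
    then show ?thesis using assms by (auto simp: cmv_L_def)
  qed
  moreover have "cmv_M n \<alpha> \<beta> (n - 1) (n - 2) = rho (\<alpha> (n - 2))"
  proof -
    have "(n - 1 - 1) div 2 = (n - 2 - 1) div 2" "2 * ((n - 1 - 1) div 2) + 1 = n - 2" "(n - 1 - 1) mod 2 = 1"
      "(n - 2 - 1) mod 2 = 0" "2 * ((n - 1 - 1) div 2) + 2 < n"
      using assms by presburger+
    then show ?thesis using assms by (auto simp: cmv_M_def Theta_def)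
  qed
  ultimately show ?thesis by simp
qed


lemma spec_basis:
  fixes n :: nat and C :: "nat \<Rightarrow> nat \<Rightarrow> complex" and \<xi> :: "nat \<Rightarrow> complex" and \<nu> :: "nat \<Rightarrow> real"
  assumes n1: "n \<ge> 1" and inj: "inj_on \<xi> {..<n}" and pos: "\<forall>j<n. \<nu> j > 0"
    and sm: "spectral_measure n C (e_last n) (\<lambda>z. \<Sum>j\<in>{j. j < n \<and> \<xi> j = z}. \<nu> j)"
  shows "\<exists>q. orthon n q \<and> (\<forall>l<n. \<forall>i<n. (\<Sum>k<n. C i k * q l k) = \<xi> l * q l i)
           \<and> (\<forall>l<n. q l (n - 1) = of_real (sqrt (\<nu> l)))"
proof -
  obtain h \<zeta> where eig: "\<forall>j<n. \<forall>i<n. (\<Sum>k<n. C i k * h j k) = \<zeta> j * h j i"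
    and ort: "\<forall>j<n. \<forall>l<n. inner_n n (h j) (h l) = (if j = l then 1 else 0)"
    and w: "\<forall>z. (\<Sum>j\<in>{j. j < n \<and> \<xi> j = z}. \<nu> j) = (\<Sum>j\<in>{j. j < n \<and> \<zeta> j = z}. (cmod (inner_n n (h j) (e_last n)))^2)"
    using sm unfolding spectral_measure_def by blast
  have ip: "inner_n n (h j) (e_last n) = h j (n - 1)" for j
    using n1 by (simp add: e_last_dlt inner_dlt_right)
  have wl: "(\<Sum>j\<in>{j. j < n \<and> \<xi> j = \<xi> l}. \<nu> j) = \<nu> l" if "l < n" for l
  proof -
    have "{j. j < n \<and> \<xi> j = \<xi> l} = {l}" using inj that by (auto simp: inj_on_def)
    then show ?thesis by simp
  qed
  have ex: "\<exists>j<n. \<zeta> j = \<xi> l" if l: "l < n" for l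
  proof (rule ccontr)
    assume "\<not> (\<exists>j<n. \<zeta> j = \<xi> l)"
    then have E: "{j. j < n \<and> \<zeta> j = \<xi> l} = {}" by auto
    have "\<nu> l = 0" using w[rule_format, of "\<xi> l"] wl[OF l] unfolding E by simp
    then show False using pos l by auto
  qed
  define f where "f l = (SOME j. j < n \<and> \<zeta> j = \<xi> l)" for l
  have f: "f l < n \<and> \<zeta> (f l) = \<xi> l" if "l < n" for l
    unfolding f_def by (rule someI_ex[OF ex[OF that]])
  have finj: "inj_on f {..<n}"
  proof (rule inj_onI)
    fix l l' assume "l \<in> {..<n}" "l' \<in> {..<n}" "f l = f l'"
    then have "\<xi> l = \<xi> l'" using f[of l] f[of l'] by simp
    then show "l = l'" using inj \<open>l \<in> {..<n}\<close> \<open>l' \<in> {..<n}\<close> by (auto simp: inj_on_def)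
  qed
  have fsurj: "f ` {..<n} = {..<n}" by (rule endo_inj_surj) (use f finj in auto)
  have set1: "{j. j < n \<and> \<zeta> j = \<xi> l} = {f l}" if l: "l < n" for l
  proof
    show "{f l} \<subseteq> {j. j < n \<and> \<zeta> j = \<xi> l}" using f[OF l] by auto
    show "{j. j < n \<and> \<zeta> j = \<xi> l} \<subseteq> {f l}"
    proof
      fix j assume j: "j \<in> {j. j < n \<and> \<zeta> j = \<xi> l}"
      then have "j \<in> f ` {..<n}" using fsurj by simp
      then obtain l' where l': "l' < n" "j = f l'" by auto
      then have "\<xi> l' = \<xi> l" using f[OF l'(1)] j by auto
      then have "l' = l" using inj l l' by (auto simp: inj_on_def)
      then show "j \<in> {f l}" using l' by simp
    qed
  qed
  have nu: "\<nu> l = (cmod (h (f l) (n - 1)))^2" if l: "l < n" for l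
    using w[rule_format, of "\<xi> l"] wl[OF l] set1[OF l] by (simp add: ip)
  have hnz: "h (f l) (n - 1) \<noteq> 0" if l: "l < n" for l using nu[OF l] pos l by auto
  define c where "c l = of_real (sqrt (\<nu> l)) / h (f l) (n - 1)" for l
  have c1: "c l * cnj (c l) = 1" if l: "l < n" for l
  proof -
    have pl: "\<nu> l > 0" using pos l by simp
    have "c l * cnj (c l) = of_real (\<nu> l) / (h (f l) (n - 1) * cnj (h (f l) (n - 1)))"
      using pl by (simp add: c_def abs_of_pos flip: of_real_mult)
    also have "h (f l) (n - 1) * cnj (h (f l) (n - 1)) = of_real (\<nu> l)"
      using nu[OF l] by (simp add: zcnj)
    finally show ?thesis using pl by simp
  qed
  define q where "q l = (\<lambda>i. c l * h (f l) i)" for l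
  have oq: "orthon n q" unfolding orthon_def
  proof (intro allI impI)
    fix l l' assume l: "l < n" "l' < n"
    have "inner_n n (q l) (q l') = c l * cnj (c l') * inner_n n (h (f l)) (h (f l'))"
      by (simp add: q_def inner_scale_left inner_scale_right)
    also have "inner_n n (h (f l)) (h (f l')) = (if l = l' then 1 else 0)"
      using ort f l finj by (auto simp: inj_on_def)
    finally show "inner_n n (q l) (q l') = (if l = l' then 1 else 0)" using c1 l by auto
  qed
  have qe: "(\<Sum>k<n. C i k * q l k) = \<xi> l * q l i" if "l < n" "i < n" for l i
  proof -
    have "(\<Sum>k<n. C i k * q l k) = c l * (\<Sum>k<n. C i k * h (f l) k)"
      by (simp add: q_def sum_distrib_left mult_ac)
    also have "\<dots> = c l * (\<zeta> (f l) * h (f l) i)" using eig f that by simp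
    finally show ?thesis using f that by (simp add: q_def mult_ac)
  qed
  have qn: "q l (n - 1) = of_real (sqrt (\<nu> l))" if "l < n" for l
    using hnz[OF that] by (simp add: q_def c_def)
  show ?thesis using oq qe qn by blast
qed


lemma sum_unit_at:
  fixes f :: "nat \<Rightarrow> complex" and n m b :: nat
  assumes s: "(\<Sum>b<n. f b * cnj (f b)) = 1" and fm: "f m * cnj (f m) = (1::complex)" and m: "m < n"
    and b: "b < n" "b \<noteq> m"
  shows "f b = 0"
proof -
  have "(\<Sum>b<n. f b * cnj (f b)) = f m * cnj (f m) + (\<Sum>b\<in>{..<n} - {m}. f b * cnj (f b))"
    using m by (simp add: sum.remove)
  then have z: "(\<Sum>b\<in>{..<n} - {m}. f b * cnj (f b)) = 0" using s fm by simp
  have e: "complex_of_real (\<Sum>b\<in>{..<n} - {m}. (cmod (f b))^2) = (\<Sum>b\<in>{..<n} - {m}. f b * cnj (f b))"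
    by (simp add: of_real_sum zcnj)
  have "complex_of_real (\<Sum>b\<in>{..<n} - {m}. (cmod (f b))^2) = 0" using e z by simp
  then have "(\<Sum>b\<in>{..<n} - {m}. (cmod (f b))^2) = 0" using of_real_eq_0_iff by blast
  then have "\<forall>b\<in>{..<n} - {m}. (cmod (f b))^2 = 0" by (subst (asm) sum_nonneg_eq_0_iff) auto
  then show ?thesis using b by simp
qed

lemma col_to_row:
  assumes u: "unitary_n n W" and m: "m < n" and col: "\<forall>a<n. a \<noteq> m \<longrightarrow> W a m = 0"
  shows "\<forall>b<n. b \<noteq> m \<longrightarrow> W m b = 0"
proof (intro allI impI)
  fix b assume b: "b < n" "b \<noteq> m"
  have "(\<Sum>a<n. cnj (W a m) * W a m) = 1" using u m unfolding unitary_n_def by auto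
  moreover have "(\<Sum>a<n. cnj (W a m) * W a m) = (\<Sum>a<n. if a = m then cnj (W m m) * W m m else 0)"
    using col by (intro sum.cong refl) auto
  ultimately have wm: "W m m * cnj (W m m) = 1" using m by (simp add: mult.commute)
  have "(\<Sum>b<n. W m b * cnj (W m b)) = 1" using u m unfolding unitary_n_def by auto
  then show "W m b = 0" using sum_unit_at[where f="W m", OF _ wm m b] by simp
qed

lemma row_to_col:
  assumes u: "unitary_n n W" and m: "m < n" and row: "\<forall>b<n. b \<noteq> m \<longrightarrow> W m b = 0"
  shows "\<forall>a<n. a \<noteq> m \<longrightarrow> W a m = 0"
proof (intro allI impI)
  fix a assume a: "a < n" "a \<noteq> m"
  have "(\<Sum>b<n. W m b * cnj (W m b)) = 1" using u m unfolding unitary_n_def by auto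
  moreover have "(\<Sum>b<n. W m b * cnj (W m b)) = (\<Sum>b<n. if b = m then W m m * cnj (W m m) else 0)"
    using row by (intro sum.cong refl) auto
  ultimately have wm: "W m m * cnj (W m m) = 1" using m by simp
  have "(\<Sum>a<n. cnj (W a m) * W a m) = 1" using u m unfolding unitary_n_def by auto
  then have "(\<Sum>a<n. W a m * cnj (W a m)) = 1" by (simp add: mult.commute)
  then show "W a m = 0" using sum_unit_at[where f="\<lambda>a. W a m", OF _ wm m a] by simp
qed

lemma diag:
  fixes W C1 C2 :: "nat \<Rightarrow> nat \<Rightarrow> complex"
  assumes n: "1 \<le> n" and uW: "unitary_n n W"
    and WC: "\<forall>a<n. \<forall>b<n. (\<Sum>c<n. W a c * C1 c b) = (\<Sum>c<n. C2 a c * W c b)"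
    and last: "\<forall>a<n. a \<noteq> n - 1 \<longrightarrow> W a (n - 1) = 0"
    and Z1a: "\<forall>i<n. \<forall>j<n. C1 i j \<noteq> 0 \<longrightarrow> j \<le> i + 2 \<and> (odd j \<longrightarrow> j \<le> i + 1)"
    and Z1b: "\<forall>i<n. \<forall>j<n. C2 i j \<noteq> 0 \<longrightarrow> j \<le> i + 2 \<and> (odd j \<longrightarrow> j \<le> i + 1)"
    and Z2a: "\<forall>i<n. \<forall>j<n. C1 i j \<noteq> 0 \<longrightarrow> i \<le> j + 2 \<and> (even i \<longrightarrow> i \<le> j + 1)"
    and Z2b: "\<forall>i<n. \<forall>j<n. C2 i j \<noteq> 0 \<longrightarrow> i \<le> j + 2 \<and> (even i \<longrightarrow> i \<le> j + 1)"
    and NZ1: "\<forall>k. k + 1 < n \<longrightarrow> even k \<longrightarrow> (\<exists>j. k < j \<and> j < n \<and> C1 k j \<noteq> 0)"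
    and NZ2: "\<forall>k. k + 1 < n \<longrightarrow> odd k \<longrightarrow> (\<exists>j. k < j \<and> j < n \<and> C2 j k \<noteq> 0)"
  shows "\<forall>a<n. \<forall>b<n. a \<noteq> b \<longrightarrow> W a b = 0"
proof -
  define P where "P k \<longleftrightarrow> (\<forall>m. k \<le> m \<longrightarrow> m < n \<longrightarrow> (\<forall>a<n. a \<noteq> m \<longrightarrow> W a m = 0) \<and> (\<forall>b<n. b \<noteq> m \<longrightarrow> W m b = 0))" for k
  have "P k" if "k \<le> n - 1" for k
    using that
  proof (induction k rule: inc_induct)
    case base
    have "(\<forall>a<n. a \<noteq> n - 1 \<longrightarrow> W a (n - 1) = 0) \<and> (\<forall>b<n. b \<noteq> n - 1 \<longrightarrow> W (n - 1) b = 0)"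
      using last col_to_row[OF uW _ last] n by auto
    moreover have "m = n - 1" if "n - 1 \<le> m" "m < n" for m using that by simp
    ultimately show ?case unfolding P_def by blast
  next
    case (step k)
    have kn: "k + 1 < n" using step.hyps by simp
    have IH: "\<And>m. Suc k \<le> m \<Longrightarrow> m < n \<Longrightarrow> (\<forall>a<n. a \<noteq> m \<longrightarrow> W a m = 0) \<and> (\<forall>b<n. b \<noteq> m \<longrightarrow> W m b = 0)"
      using step.IH unfolding P_def by blast
    have both: "(\<forall>a<n. a \<noteq> k \<longrightarrow> W a k = 0) \<and> (\<forall>b<n. b \<noteq> k \<longrightarrow> W k b = 0)"
    proof (cases "even k")
      case True
      obtain j where j: "k < j" "j < n" "C1 k j \<noteq> 0" using NZ1 kn True by blast
      have col: "\<forall>a<n. a \<noteq> k \<longrightarrow> W a k = 0"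
      proof (intro allI impI)
        fix a assume a: "a < n" "a \<noteq> k"
        show "W a k = 0"
        proof (cases "a < k")
          case False
          then have "Suc k \<le> a" using a by simp
          then show ?thesis using IH[of a] a by auto
        next
          case True
          have "(\<Sum>c<n. C2 a c * W c j) = (\<Sum>c<n. 0)"
          proof (intro sum.cong refl)
            fix c assume c: "c \<in> {..<n}"
            show "C2 a c * W c j = 0"
            proof (cases "c = j")
              case True
              have "C2 a j = 0"
              proof (rule ccontr)
                assume "C2 a j \<noteq> 0"
                then have "j \<le> a + 2 \<and> (odd j \<longrightarrow> j \<le> a + 1)" using Z1b a j by blast
                then show False using \<open>a < k\<close> j \<open>even k\<close> by presburger
              qed
              then show ?thesis using True by simp
            next
              case False
              then show ?thesis using IH[of j] j c by auto
            qed
          qed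
          moreover have "(\<Sum>c<n. W a c * C1 c j) = (\<Sum>c<n. if c = k then W a k * C1 k j else 0)"
          proof (intro sum.cong refl)
            fix c assume c: "c \<in> {..<n}"
            show "W a c * C1 c j = (if c = k then W a k * C1 k j else 0)"
            proof (cases "c < k")
              case True
              have "C1 c j = 0"
              proof (rule ccontr)
                assume "C1 c j \<noteq> 0"
                then have "j \<le> c + 2 \<and> (odd j \<longrightarrow> j \<le> c + 1)" using Z1a c j by blast
                then show False using True j \<open>even k\<close> by presburger
              qed
              then show ?thesis using True by simp
            next
              case False
              show ?thesis
              proof (cases "c = k")
                case False
                then have "Suc k \<le> c" using \<open>\<not> c < k\<close> by simp
                then show ?thesis using IH[of c] c \<open>a < k\<close> False by auto
              qed simp
            qed
          qed
          ultimately have "W a k * C1 k j = 0" using WC a j kn by simp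
          then show ?thesis using j by simp
        qed
      qed
      then show ?thesis using col_to_row[OF uW _ col] kn by simp
    next
      case False
      obtain j where j: "k < j" "j < n" "C2 j k \<noteq> 0" using NZ2 kn False by blast
      have row: "\<forall>b<n. b \<noteq> k \<longrightarrow> W k b = 0"
      proof (intro allI impI)
        fix b assume b: "b < n" "b \<noteq> k"
        show "W k b = 0"
        proof (cases "b < k")
          case False
          then have "Suc k \<le> b" using b by simp
          then show ?thesis using IH[of b] b by auto
        next
          case True
          have "(\<Sum>c<n. W j c * C1 c b) = (\<Sum>c<n. 0)"
          proof (intro sum.cong refl)
            fix c assume c: "c \<in> {..<n}"
            show "W j c * C1 c b = 0"
            proof (cases "c = j")
              case True
              have "C1 j b = 0"
              proof (rule ccontr)
                assume "C1 j b \<noteq> 0"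
                then have "j \<le> b + 2 \<and> (even j \<longrightarrow> j \<le> b + 1)" using Z2a b j by blast
                then show False using \<open>b < k\<close> j \<open>odd k\<close> by presburger
              qed
              then show ?thesis using True by simp
            next
              case False
              then show ?thesis using IH[of j] j c by auto
            qed
          qed
          moreover have "(\<Sum>c<n. C2 j c * W c b) = (\<Sum>c<n. if c = k then C2 j k * W k b else 0)"
          proof (intro sum.cong refl)
            fix c assume c: "c \<in> {..<n}"
            show "C2 j c * W c b = (if c = k then C2 j k * W k b else 0)"
            proof (cases "c < k")
              case True
              have "C2 j c = 0"
              proof (rule ccontr)
                assume "C2 j c \<noteq> 0"
                then have "j \<le> c + 2 \<and> (even j \<longrightarrow> j \<le> c + 1)" using Z2b c j by blast
                then show False using True j \<open>odd k\<close> by presburger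
              qed
              then show ?thesis using True by simp
            next
              case False
              show ?thesis
              proof (cases "c = k")
                case False
                then have "Suc k \<le> c" using \<open>\<not> c < k\<close> by simp
                then show ?thesis using IH[of c] c \<open>b < k\<close> False by auto
              qed simp
            qed
          qed
          ultimately have "C2 j k * W k b = 0" using WC b j kn by simp
          then show ?thesis using j by simp
        qed
      qed
      then show ?thesis using row_to_col[OF uW _ row] kn by simp
    qed
    show ?case unfolding P_def
    proof (intro allI impI)
      fix m assume "k \<le> m" "m < n"
      then show "(\<forall>a<n. a \<noteq> m \<longrightarrow> W a m = 0) \<and> (\<forall>b<n. b \<noteq> m \<longrightarrow> W m b = 0)"
        using both IH[of m] by (cases "m = k") auto
    qed
  qed
  then have "P 0" by simp
  then show ?thesis unfolding P_def by blast
qed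


definition Qm :: "nat \<Rightarrow> (nat \<Rightarrow> nat \<Rightarrow> complex) \<Rightarrow> nat \<Rightarrow> nat \<Rightarrow> complex" where
  "Qm n q a l = (if a < n \<and> l < n then q l a else 0)"

lemma comp_rows:
  assumes oq: "orthon n q" and a: "a < n" and b: "b < n"
  shows "(\<Sum>l<n. q l a * cnj (q l b)) = (if a = b then 1 else 0)"
proof -
  have "(\<Sum>l<n. inner_n n (dlt b) (q l) * q l a) = dlt b a" by (rule complete[OF oq a])
  moreover have "(\<Sum>l<n. inner_n n (dlt b) (q l) * q l a) = (\<Sum>l<n. q l a * cnj (q l b))"
    using b by (intro sum.cong refl) (simp add: inner_dlt_left mult.commute)
  ultimately show ?thesis by (simp add: dlt_def)
qed

lemma Qm_unitary: "orthon n q \<Longrightarrow> unitary_n n (Qm n q)"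
proof -
  assume oq: "orthon n q"
  have 1: "(\<Sum>k<n. Qm n q i k * cnj (Qm n q j k)) = (if i = j then 1 else 0)" if "i < n" "j < n" for i j
    using comp_rows[OF oq that] that by (simp add: Qm_def)
  have 2: "(\<Sum>k<n. cnj (Qm n q k i) * Qm n q k j) = (if i = j then 1 else 0)" if "i < n" "j < n" for i j
  proof -
    have "(\<Sum>k<n. cnj (Qm n q k i) * Qm n q k j) = inner_n n (q j) (q i)"
      unfolding inner_n_def using that by (intro sum.cong refl) (simp add: Qm_def mult.commute)
    then show ?thesis using oq that unfolding orthon_def by auto
  qed
  show ?thesis unfolding unitary_n_def using 1 2 by blast
qed

lemma unitary_adj: "unitary_n n A \<Longrightarrow> unitary_n n (adj A)"
  unfolding unitary_n_def adj_def by (simp add: mult.commute)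

lemma bnd_Qm: "bnd n (Qm n q)" by (auto simp: bnd_def Qm_def)

definition Dm :: "nat \<Rightarrow> (nat \<Rightarrow> complex) \<Rightarrow> nat \<Rightarrow> nat \<Rightarrow> complex" where
  "Dm n \<xi> a b = (if a < n \<and> b = a then \<xi> a else 0)"

lemma eig_mm:
  assumes bC: "bnd n C" and e: "\<forall>l<n. \<forall>i<n. (\<Sum>k<n. C i k * q l k) = \<xi> l * q l i"
  shows "mm n C (Qm n q) = mm n (Qm n q) (Dm n \<xi>)"
proof (intro ext)
  fix i l
  show "mm n C (Qm n q) i l = mm n (Qm n q) (Dm n \<xi>) i l"
  proof (cases "i < n \<and> l < n")
    case True
    have "mm n C (Qm n q) i l = (\<Sum>k<n. C i k * q l k)"
      unfolding mm_def using True by (intro sum.cong refl) (simp add: Qm_def)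
    also have "\<dots> = \<xi> l * q l i" using e True by simp
    also have "\<dots> = mm n (Qm n q) (Dm n \<xi>) i l"
    proof -
      have "mm n (Qm n q) (Dm n \<xi>) i l = (\<Sum>k<n. if k = l then Qm n q i l * \<xi> l else 0)"
        unfolding mm_def by (intro sum.cong refl) (auto simp: Dm_def)
      then show ?thesis using True by (simp add: Qm_def mult.commute)
    qed
    finally show ?thesis .
  next
    case False
    then show ?thesis using bC by (auto simp: mm_def Qm_def Dm_def bnd_def)
  qed
qed

lemma eqw:
  assumes "w1 * of_real r1 = of_real r2 * w2" "w1 * cnj w1 = 1" "w2 * cnj w2 = 1" "r1 > 0" "r2 > 0"
  shows "w1 = w2"
proof -
  have m1: "cmod w1 = 1" "cmod w2 = 1"
  proof -
    have "complex_of_real ((cmod w1)^2) = 1" "complex_of_real ((cmod w2)^2) = 1"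
      using assms(2,3) by (simp_all add: zcnj)
    then have "(cmod w1)^2 = 1" "(cmod w2)^2 = 1" using of_real_eq_1_iff by blast+
    then show "cmod w1 = 1" "cmod w2 = 1" using norm_ge_zero[of w1] norm_ge_zero[of w2]
      by (auto simp: power2_eq_1_iff)
  qed
  have "cmod (w1 * of_real r1) = cmod (of_real r2 * w2)" using assms(1) by simp
  then have "r1 = r2" using m1 assms(4,5) by (simp add: norm_mult)
  then show ?thesis using assms(1,4) by simp
qed


definition valid :: "nat \<Rightarrow> (nat \<Rightarrow> complex) \<Rightarrow> complex \<Rightarrow> bool" where
  "valid n \<alpha> \<beta> \<longleftrightarrow> (\<forall>j<n - 1. cmod (\<alpha> j) < 1) \<and> cmod \<beta> = 1"

lemma rho_pos': "cmod a < 1 \<Longrightarrow> \<exists>r>0. rho a = of_real r"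
  using rho_pos by blast

lemma cmv_pe: "valid n \<alpha> \<beta> \<Longrightarrow> even k \<Longrightarrow> k + 2 < n \<Longrightarrow> \<exists>r>0. cmv n \<alpha> \<beta> k (k + 2) = of_real r"
proof -
  assume v: "valid n \<alpha> \<beta>" "even k" "k + 2 < n"
  obtain r1 r2 where "r1 > 0" "rho (\<alpha> k) = of_real r1" "r2 > 0" "rho (\<alpha> (k + 1)) = of_real r2"
    using v rho_pos'[of "\<alpha> k"] rho_pos'[of "\<alpha> (k + 1)"] unfolding valid_def by auto
  then show ?thesis using cmv_E1[OF v(2,3)] by (intro exI[of _ "r1 * r2"]) simp
qed

lemma cmv_po: "valid n \<alpha> \<beta> \<Longrightarrow> odd k \<Longrightarrow> k + 2 < n \<Longrightarrow> \<exists>r>0. cmv n \<alpha> \<beta> (k + 2) k = of_real r"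
proof -
  assume v: "valid n \<alpha> \<beta>" "odd k" "k + 2 < n"
  obtain r1 r2 where "r1 > 0" "rho (\<alpha> k) = of_real r1" "r2 > 0" "rho (\<alpha> (k + 1)) = of_real r2"
    using v rho_pos'[of "\<alpha> k"] rho_pos'[of "\<alpha> (k + 1)"] unfolding valid_def by auto
  then show ?thesis using cmv_E2[OF v(2,3)] by (intro exI[of _ "r2 * r1"]) simp
qed

lemma cmv_p10: "valid n \<alpha> \<beta> \<Longrightarrow> 2 \<le> n \<Longrightarrow> \<exists>r>0. cmv n \<alpha> \<beta> 1 0 = of_real r"
  using cmv_E3[of n \<alpha> \<beta>] rho_pos'[of "\<alpha> 0"] unfolding valid_def by auto

lemma cmv_nz1: "valid n \<alpha> \<beta> \<Longrightarrow> k + 1 < n \<Longrightarrow> even k \<Longrightarrow> \<exists>j. k < j \<and> j < n \<and> cmv n \<alpha> \<beta> k j \<noteq> 0"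
proof -
  assume v: "valid n \<alpha> \<beta>" "k + 1 < n" "even k"
  show ?thesis
  proof (cases "k + 2 < n")
    case True
    then show ?thesis using cmv_pe[OF v(1,3) True] by (intro exI[of _ "k + 2"]) auto
  next
    case False
    then have k: "k = n - 2" "even n" "2 \<le> n" using v by presburger+
    obtain r where "r > 0" "rho (\<alpha> (n - 2)) = of_real r"
      using v rho_pos'[of "\<alpha> (n - 2)"] k unfolding valid_def by auto
    moreover have "cnj \<beta> \<noteq> 0" using v unfolding valid_def by auto
    ultimately show ?thesis using cmv_E4[OF k(2,3), of \<alpha> \<beta>] k by (intro exI[of _ "n - 1"]) auto
  qed
qed

lemma cmv_nz2: "valid n \<alpha> \<beta> \<Longrightarrow> k + 1 < n \<Longrightarrow> odd k \<Longrightarrow> \<exists>j. k < j \<and> j < n \<and> cmv n \<alpha> \<beta> j k \<noteq> 0"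
proof -
  assume v: "valid n \<alpha> \<beta>" "k + 1 < n" "odd k"
  show ?thesis
  proof (cases "k + 2 < n")
    case True
    then show ?thesis using cmv_po[OF v(1,3) True] by (intro exI[of _ "k + 2"]) auto
  next
    case False
    then have k: "k = n - 2" "odd n" "3 \<le> n" using v by presburger+
    obtain r where "r > 0" "rho (\<alpha> (n - 2)) = of_real r"
      using v rho_pos'[of "\<alpha> (n - 2)"] k unfolding valid_def by auto
    moreover have "cnj \<beta> \<noteq> 0" using v unfolding valid_def by auto
    ultimately show ?thesis using cmv_E5[OF k(2,3), of \<alpha> \<beta>] k by (intro exI[of _ "n - 1"]) auto
  qed
qed

lemma uniq:
  fixes n :: nat and \<xi> :: "nat \<Rightarrow> complex" and \<nu> :: "nat \<Rightarrow> real"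
  assumes n1: "n \<ge> 1" and inj: "inj_on \<xi> {..<n}" and pos: "\<forall>j<n. \<nu> j > 0"
    and v1: "valid n \<alpha>1 \<beta>1" and v2: "valid n \<alpha>2 \<beta>2"
    and s1: "spectral_measure n (cmv n \<alpha>1 \<beta>1) (e_last n) (\<lambda>z. \<Sum>j\<in>{j. j < n \<and> \<xi> j = z}. \<nu> j)"
    and s2: "spectral_measure n (cmv n \<alpha>2 \<beta>2) (e_last n) (\<lambda>z. \<Sum>j\<in>{j. j < n \<and> \<xi> j = z}. \<nu> j)"
  shows "cmv n \<alpha>1 \<beta>1 = cmv n \<alpha>2 \<beta>2"
proof -
  define C1 where "C1 = cmv n \<alpha>1 \<beta>1"
  define C2 where "C2 = cmv n \<alpha>2 \<beta>2"
  obtain q where oq: "orthon n q" and eq: "\<forall>l<n. \<forall>i<n. (\<Sum>k<n. C1 i k * q l k) = \<xi> l * q l i"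
      and qn: "\<forall>l<n. q l (n - 1) = of_real (sqrt (\<nu> l))"
    using spec_basis[OF n1 inj pos s1] unfolding C1_def by blast
  obtain q' where oq': "orthon n q'" and eq': "\<forall>l<n. \<forall>i<n. (\<Sum>k<n. C2 i k * q' l k) = \<xi> l * q' l i"
      and qn': "\<forall>l<n. q' l (n - 1) = of_real (sqrt (\<nu> l))"
    using spec_basis[OF n1 inj pos s2] unfolding C2_def by blast
  define Q where "Q = Qm n q"
  define Q' where "Q' = Qm n q'"
  define D where "D = Dm n \<xi>"
  define W where "W = mm n Q' (adj Q)"
  have bC1: "bnd n C1" and bC2: "bnd n C2" by (simp_all add: C1_def C2_def bnd_cmv)
  have bQ: "bnd n Q" "bnd n Q'" "bnd n (adj Q)" by (simp_all add: Q_def Q'_def bnd_Qm bnd_adj)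
  have uQ: "unitary_n n Q" "unitary_n n Q'" "unitary_n n (adj Q)"
    using Qm_unitary[OF oq] Qm_unitary[OF oq'] unitary_adj by (auto simp: Q_def Q'_def)
  have QQ: "mm n Q (adj Q) = idm n" "mm n (adj Q) Q = idm n" using unitary_eq[OF uQ(1) bQ(1)] by auto
  have uW: "unitary_n n W" unfolding W_def by (rule unitary_mult[OF uQ(2) bQ(2) uQ(3) bQ(3)])
  have e1: "mm n C1 Q = mm n Q D" unfolding Q_def D_def by (rule eig_mm[OF bC1 eq])
  have e2: "mm n C2 Q' = mm n Q' D" unfolding Q'_def D_def by (rule eig_mm[OF bC2 eq'])
  have C1f: "C1 = mm n (mm n Q D) (adj Q)"
  proof -
    have "C1 = mm n C1 (mm n Q (adj Q))" using QQ(1) mm_idr[OF bC1] by simp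
    also have "\<dots> = mm n (mm n Q D) (adj Q)" by (simp add: mm_assoc[symmetric] e1)
    finally show ?thesis .
  qed
  have WC: "mm n W C1 = mm n C2 W"
  proof -
    have "mm n W C1 = mm n Q' (mm n (mm n (adj Q) Q) (mm n D (adj Q)))"
      unfolding W_def C1f by (simp only: mm_assoc)
    also have "\<dots> = mm n Q' (mm n D (adj Q))"
    proof -
      have bD: "bnd n D" by (auto simp: D_def Dm_def bnd_def)
      show ?thesis using QQ(2) mm_idl[OF bnd_mm[OF bD bQ(3)]] by simp
    qed
    also have "\<dots> = mm n C2 W" unfolding W_def by (simp only: mm_assoc[symmetric] e2)
    finally show ?thesis .
  qed
  have Wl: "\<forall>a<n. a \<noteq> n - 1 \<longrightarrow> W a (n - 1) = 0"
  proof (intro allI impI)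
    fix a assume a: "a < n" "a \<noteq> n - 1"
    have "W a (n - 1) = (\<Sum>l<n. q' l a * cnj (q' l (n - 1)))"
      unfolding W_def mm_def using a n1 qn qn' by (intro sum.cong refl) (simp add: Q_def Q'_def adj_def Qm_def)
    also have "\<dots> = 0" using comp_rows[OF oq' a(1), of "n - 1"] a n1 by simp
    finally show "W a (n - 1) = 0" .
  qed
  have WCe: "\<forall>a<n. \<forall>b<n. (\<Sum>c<n. W a c * C1 c b) = (\<Sum>c<n. C2 a c * W c b)"
  proof (intro allI impI)
    fix a b assume "a < n" "b < n"
    show "(\<Sum>c<n. W a c * C1 c b) = (\<Sum>c<n. C2 a c * W c b)"
      using fun_cong[OF fun_cong[OF WC, of a], of b] unfolding mm_def .
  qed
  have Z: "\<forall>i<n. \<forall>j<n. C i j \<noteq> 0 \<longrightarrow> j \<le> i + 2 \<and> (odd j \<longrightarrow> j \<le> i + 1)"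
          "\<forall>i<n. \<forall>j<n. C i j \<noteq> 0 \<longrightarrow> i \<le> j + 2 \<and> (even i \<longrightarrow> i \<le> j + 1)"
    if "C = cmv n \<alpha> \<beta>" for C \<alpha> \<beta> using cmv_Z1 cmv_Z2 that by blast+
  have NZ1: "\<forall>k. k + 1 < n \<longrightarrow> even k \<longrightarrow> (\<exists>j. k < j \<and> j < n \<and> C1 k j \<noteq> 0)"
    using cmv_nz1[OF v1] unfolding C1_def by blast
  have NZ2: "\<forall>k. k + 1 < n \<longrightarrow> odd k \<longrightarrow> (\<exists>j. k < j \<and> j < n \<and> C2 j k \<noteq> 0)"
    using cmv_nz2[OF v2] unfolding C2_def by blast
  have offd: "\<forall>a<n. \<forall>b<n. a \<noteq> b \<longrightarrow> W a b = 0"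
    by (rule diag[OF n1 uW WCe Wl Z(1)[OF C1_def] Z(1)[OF C2_def] Z(2)[OF C1_def] Z(2)[OF C2_def] NZ1 NZ2])
  define w where "w a = W a a" for a
  have rel: "w a * C1 a b = C2 a b * w b" if "a < n" "b < n" for a b
  proof -
    have "(\<Sum>c<n. W a c * C1 c b) = (\<Sum>c<n. if c = a then w a * C1 a b else 0)"
      using offd that by (intro sum.cong refl) (auto simp: w_def)
    moreover have "(\<Sum>c<n. C2 a c * W c b) = (\<Sum>c<n. if c = b then C2 a b * w b else 0)"
      using offd that by (intro sum.cong refl) (auto simp: w_def)
    ultimately show ?thesis using WCe that by simp
  qed
  have wu: "w a * cnj (w a) = 1" if "a < n" for a
  proof -
    have "(\<Sum>c<n. cnj (W c a) * W c a) = 1" using uW that unfolding unitary_n_def by auto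
    moreover have "(\<Sum>c<n. cnj (W c a) * W c a) = (\<Sum>c<n. if c = a then cnj (w a) * w a else 0)"
      using offd that by (intro sum.cong refl) (auto simp: w_def)
    ultimately show ?thesis using that by (simp add: mult.commute)
  qed
  have step2: "w (k + 2) = w k" if kn: "k + 2 < n" for k
  proof (cases "even k")
    case True
    obtain r1 where r1: "r1 > 0" "C1 k (k + 2) = of_real r1" using cmv_pe[OF v1 True kn] C1_def by auto
    obtain r2 where r2: "r2 > 0" "C2 k (k + 2) = of_real r2" using cmv_pe[OF v2 True kn] C2_def by auto
    have "w k * of_real r1 = of_real r2 * w (k + 2)" using rel[of k "k + 2"] kn r1 r2 by simp
    then show ?thesis using eqw[of "w k" r1 r2 "w (k + 2)"] wu r1 r2 kn by simp
  next
    case False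
    obtain r1 where r1: "r1 > 0" "C1 (k + 2) k = of_real r1" using cmv_po[OF v1 False kn] C1_def by auto
    obtain r2 where r2: "r2 > 0" "C2 (k + 2) k = of_real r2" using cmv_po[OF v2 False kn] C2_def by auto
    have "w (k + 2) * of_real r1 = of_real r2 * w k" using rel[of "k + 2" k] kn r1 r2 by simp
    then show ?thesis using eqw[of "w (k + 2)" r1 r2 "w k"] wu r1 r2 kn by simp
  qed
  have step1: "w 1 = w 0" if n2: "2 \<le> n"
  proof -
    obtain r1 where r1: "r1 > 0" "C1 1 0 = of_real r1" using cmv_p10[OF v1 n2] C1_def by auto
    obtain r2 where r2: "r2 > 0" "C2 1 0 = of_real r2" using cmv_p10[OF v2 n2] C2_def by auto
    have "w 1 * of_real r1 = of_real r2 * w 0" using rel[of 1 0] n2 r1 r2 by simp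
    then show ?thesis using eqw[of "w 1" r1 r2 "w 0"] wu r1 r2 n2 by simp
  qed
  have wall: "w a = w 0" if "a < n" for a
    using that
  proof (induction a rule: less_induct)
    case (less a)
    show ?case
    proof (cases "a < 2")
      case True
      then show ?thesis using step1 less.prems by (cases a) auto
    next
      case False
      then obtain b where b: "a = b + 2" by (metis add.commute le_Suc_ex not_less)
      then have "w a = w b" using step2 less.prems by simp
      also have "w b = w 0" using less.IH[of b] b less.prems by simp
      finally show ?thesis .
    qed
  qed
  have "C1 a b = C2 a b" for a b
  proof (cases "a < n \<and> b < n")
    case True
    have wa: "w a = w 0" using wall True by blast
    have wb: "w b = w 0" using wall True by blast
    have "w a = w b" using wa wb by (rule trans[OF _ sym])
    moreover have "w b \<noteq> 0" using wu[of b] True by auto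
    ultimately show ?thesis using rel[of a b] True by (simp add: mult.commute)
  next
    case False
    then show ?thesis using bC1 bC2 unfolding bnd_def by auto
  qed
  then show ?thesis unfolding C1_def C2_def by (intro ext)
qed

theorem theorem1:
  fixes n :: nat and \<xi> :: "nat \<Rightarrow> complex" and \<nu> :: "nat \<Rightarrow> real"
  assumes "n \<ge> 1"
    and "\<forall>j<n. cmod (\<xi> j) = 1"
    and "inj_on \<xi> {..<n}"
    and "\<forall>j<n. \<nu> j > 0"
    and "(\<Sum>j<n. \<nu> j) = 1"
  shows "\<exists>!C. (\<exists>\<alpha> \<beta>. (\<forall>j<n - 1. cmod (\<alpha> j) < 1) \<and> cmod \<beta> = 1 \<and> C = cmv n \<alpha> \<beta>)
             \<and> spectral_measure n C (e_last n) (\<lambda>z. \<Sum>j\<in>{j. j < n \<and> \<xi> j = z}. \<nu> j)"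
proof (rule ex_ex1I)
  show "\<exists>C. (\<exists>\<alpha> \<beta>. (\<forall>j<n - 1. cmod (\<alpha> j) < 1) \<and> cmod \<beta> = 1 \<and> C = cmv n \<alpha> \<beta>)
             \<and> spectral_measure n C (e_last n) (\<lambda>z. \<Sum>j\<in>{j. j < n \<and> \<xi> j = z}. \<nu> j)"
    by (rule existence[OF assms])
next
  fix C1 C2
  assume a1: "(\<exists>\<alpha> \<beta>. (\<forall>j<n - 1. cmod (\<alpha> j) < 1) \<and> cmod \<beta> = 1 \<and> C1 = cmv n \<alpha> \<beta>)
             \<and> spectral_measure n C1 (e_last n) (\<lambda>z. \<Sum>j\<in>{j. j < n \<and> \<xi> j = z}. \<nu> j)"
    and a2: "(\<exists>\<alpha> \<beta>. (\<forall>j<n - 1. cmod (\<alpha> j) < 1) \<and> cmod \<beta> = 1 \<and> C2 = cmv n \<alpha> \<beta>)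
             \<and> spectral_measure n C2 (e_last n) (\<lambda>z. \<Sum>j\<in>{j. j < n \<and> \<xi> j = z}. \<nu> j)"
  obtain \<alpha>1 \<beta>1 where b1: "valid n \<alpha>1 \<beta>1" "C1 = cmv n \<alpha>1 \<beta>1" using a1 unfolding valid_def by blast
  obtain \<alpha>2 \<beta>2 where b2: "valid n \<alpha>2 \<beta>2" "C2 = cmv n \<alpha>2 \<beta>2" using a2 unfolding valid_def by blast
  have s1: "spectral_measure n (cmv n \<alpha>1 \<beta>1) (e_last n) (\<lambda>z. \<Sum>j\<in>{j. j < n \<and> \<xi> j = z}. \<nu> j)"
    using a1 b1(2) by simp
  have s2: "spectral_measure n (cmv n \<alpha>2 \<beta>2) (e_last n) (\<lambda>z. \<Sum>j\<in>{j. j < n \<and> \<xi> j = z}. \<nu> j)"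
    using a2 b2(2) by simp
  show "C1 = C2" using uniq[OF assms(1,3,4) b1(1) b2(1) s1 s2] b1(2) b2(2) by simp
qed


end
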